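(* Let $G_1$ be a finite cubic bridgeless graph. Then the line graph $L(G_1)$ is symmetric with respect to graph entropy, i.e., the uniform distribution on $V(L(G_1))$ maximizes $H(L(G_1),P)$ over all probability distributions $P$ on $V(L(G_1))$.
   Context: The line graph $L(G_1)$ has vertex set $E(G_1)$, two edges adjacent when they share an endpoint. For a finite graph $G$ with $V(G)=\{1,\dots,n\}$, the vertex packing polytope $VP(G)$ is the convex hull of the characteristic vectors of independent sets of $G$, and for a probability distribution $P=(p_1,\dots,p_n)$ on $V(G)$ the graph entropy is $H(G,P)=\min_{\mathbf a\in VP(G)}\sum_{i=1}^n p_i\log(1/a_i)$. *)

theory Defs
  imports Complex_Main
begin

definition simple_graph :: "'a set \<Rightarrow> 'a set set \<Rightarrow> bool" where
  "simple_graph V E \<longleftrightarrow> finite V \<and> (\<forall>e\<in>E. e \<subseteq> V \<and> card e = 2)"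

definition degree :: "'a set set \<Rightarrow> 'a \<Rightarrow> nat" where
  "degree E v = card {e\<in>E. v \<in> e}"

definition cubic_graph :: "'a set \<Rightarrow> 'a set set \<Rightarrow> bool" where
  "cubic_graph V E \<longleftrightarrow> simple_graph V E \<and> (\<forall>v\<in>V. degree E v = 3)"

definition adj_edges :: "'a set set \<Rightarrow> 'a \<Rightarrow> 'a \<Rightarrow> bool" where
  "adj_edges E u v \<longleftrightarrow> u \<noteq> v \<and> {u, v} \<in> E"

definition is_bridge :: "'a set set \<Rightarrow> 'a set \<Rightarrow> bool" where
  "is_bridge E e \<longleftrightarrow> e \<in> E \<and>
     (\<exists>u v. e = {u, v} \<and> u \<noteq> v \<and> \<not> (adj_edges (E - {e}))\<^sup>*\<^sup>* u v)"

definition bridgeless :: "'a set set \<Rightarrow> bool" where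
  "bridgeless E \<longleftrightarrow> (\<forall>e\<in>E. \<not> is_bridge E e)"

text \<open>The line graph L(G) has vertex set E(G); two (distinct) edges are adjacent
  when they share an endpoint.\<close>
definition line_adj :: "'a set \<Rightarrow> 'a set \<Rightarrow> bool" where
  "line_adj e f \<longleftrightarrow> e \<noteq> f \<and> e \<inter> f \<noteq> {}"

text \<open>A graph here is a finite vertex set W together with an adjacency relation.\<close>

definition independent_set :: "'b set \<Rightarrow> ('b \<Rightarrow> 'b \<Rightarrow> bool) \<Rightarrow> 'b set \<Rightarrow> bool" where
  "independent_set W adj S \<longleftrightarrow> S \<subseteq> W \<and> (\<forall>x\<in>S. \<forall>y\<in>S. \<not> adj x y)"

text \<open>VP(G): the convex hull of the characteristic vectors (on W) of the
  independent sets, i.e. the set of convex combinations of them (the family of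
  independent sets is finite). Vectors are functions W -> real; values outside W
  are irrelevant and fixed to 0.\<close>
definition VP :: "'b set \<Rightarrow> ('b \<Rightarrow> 'b \<Rightarrow> bool) \<Rightarrow> ('b \<Rightarrow> real) set" where
  "VP W adj = {a. \<exists>c :: 'b set \<Rightarrow> real.
      (\<forall>S. c S \<ge> 0) \<and> (\<forall>S. c S \<noteq> 0 \<longrightarrow> independent_set W adj S) \<and>
      (\<Sum>S\<in>{S. independent_set W adj S}. c S) = 1 \<and>
      (\<forall>i. a i = (\<Sum>S\<in>{S. independent_set W adj S}. c S * (if i \<in> S then 1 else 0)))}"

definition prob_dist :: "'b set \<Rightarrow> ('b \<Rightarrow> real) \<Rightarrow> bool" where
  "prob_dist W p \<longleftrightarrow> (\<forall>i\<in>W. p i \<ge> 0) \<and> (\<Sum>i\<in>W. p i) = 1"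

text \<open>H(G,P) = min over a in VP(G) of sum_i p_i log(1/a_i), with the usual
  conventions 0 log(1/0) = 0 and p log(1/0) = +infinity for p > 0. Hence only
  points a with a_i > 0 whenever p_i > 0 are admissible, and only indices with
  p_i > 0 contribute. The minimum is attained (compactness), so it coincides with
  the infimum taken here.\<close>
definition graph_entropy :: "'b set \<Rightarrow> ('b \<Rightarrow> 'b \<Rightarrow> bool) \<Rightarrow> ('b \<Rightarrow> real) \<Rightarrow> real" where
  "graph_entropy W adj p = Inf {(\<Sum>i\<in>{i\<in>W. p i > 0}. p i * log 2 (1 / a i)) | a.
      a \<in> VP W adj \<and> (\<forall>i\<in>W. p i > 0 \<longrightarrow> a i > 0)}"

definition uniform_dist :: "'b set \<Rightarrow> 'b \<Rightarrow> real" where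
  "uniform_dist W = (\<lambda>i. 1 / real (card W))"

definition entropy_symmetric :: "'b set \<Rightarrow> ('b \<Rightarrow> 'b \<Rightarrow> bool) \<Rightarrow> bool" where
  "entropy_symmetric W adj \<longleftrightarrow>
     (\<forall>p. prob_dist W p \<longrightarrow> graph_entropy W adj p \<le> graph_entropy W adj (uniform_dist W))"

end

theory Submission
  imports Defs
begin

definition mg :: "'v set \<Rightarrow> 'e set \<Rightarrow> ('e \<Rightarrow> 'v set) \<Rightarrow> bool" where
  "mg V E en \<longleftrightarrow> finite V \<and> finite E \<and> (\<forall>e\<in>E. en e \<subseteq> V \<and> card (en e) = 2)"

definition inc :: "'e set \<Rightarrow> ('e \<Rightarrow> 'v set) \<Rightarrow> 'v \<Rightarrow> 'e set" where
  "inc E en v = {e\<in>E. v \<in> en e}"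

definition cut :: "'e set \<Rightarrow> ('e \<Rightarrow> 'v set) \<Rightarrow> 'v set \<Rightarrow> 'e set" where
  "cut E en S = {e\<in>E. en e \<inter> S \<noteq> {} \<and> \<not> en e \<subseteq> S}"

definition inP :: "'v set \<Rightarrow> 'e set \<Rightarrow> ('e \<Rightarrow> 'v set) \<Rightarrow> ('e \<Rightarrow> real) \<Rightarrow> bool" where
  "inP V E en x \<longleftrightarrow> (\<forall>e\<in>E. 0 \<le> x e) \<and> (\<forall>v\<in>V. sum x (inc E en v) = 1) \<and>
     (\<forall>S. S \<subseteq> V \<longrightarrow> odd (card S) \<longrightarrow> 1 \<le> sum x (cut E en S))"

definition pm :: "'v set \<Rightarrow> 'e set \<Rightarrow> ('e \<Rightarrow> 'v set) \<Rightarrow> 'e set \<Rightarrow> bool" where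
  "pm V E en M \<longleftrightarrow> M \<subseteq> E \<and> (\<forall>v\<in>V. card (inc M en v) = 1)"

definition decomp :: "'v set \<Rightarrow> 'e set \<Rightarrow> ('e \<Rightarrow> 'v set) \<Rightarrow> ('e \<Rightarrow> real) \<Rightarrow> bool" where
  "decomp V E en x \<longleftrightarrow> (\<exists>c. (\<forall>M. 0 \<le> c M) \<and> (\<forall>M. c M \<noteq> 0 \<longrightarrow> pm V E en M) \<and>
      sum c (Pow E) = 1 \<and> (\<forall>e\<in>E. sum c {M\<in>Pow E. e \<in> M} = x e))"

lemma mg_finite: "mg V E en \<Longrightarrow> finite V" "mg V E en \<Longrightarrow> finite E"
  by (auto simp: mg_def)

lemma mg_en: "mg V E en \<Longrightarrow> e \<in> E \<Longrightarrow> en e \<subseteq> V"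
  "mg V E en \<Longrightarrow> e \<in> E \<Longrightarrow> card (en e) = 2"
  by (auto simp: mg_def)

lemma card2_obtain: assumes "card A = 2" obtains a b where "A = {a,b}" "a \<noteq> b"
  using assms by (meson card_2_iff)

lemma inc_cut: assumes "mg V E en" shows "inc E en v = cut E en {v}"
proof -
  have "\<not> en e \<subseteq> {v}" if "e \<in> E" for e
  proof
    assume "en e \<subseteq> {v}"
    then have "card (en e) \<le> card {v}" by (intro card_mono) auto
    with mg_en(2)[OF assms that] show False by simp
  qed
  then show ?thesis by (auto simp: inc_def cut_def)
qed

lemma cut_compl: assumes "mg V E en" "S \<subseteq> V" shows "cut E en (V - S) = cut E en S"
  using mg_en(1)[OF assms(1)] assms(2) unfolding cut_def by blast

lemma cut_V: assumes "mg V E en" shows "cut E en V = {}"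
  using mg_en(1)[OF assms(1)] unfolding cut_def by blast

lemma card_en_Int: assumes "mg V E en" "e \<in> E"
  shows "card (en e \<inter> S) = (if e \<in> cut E en S then 1 else if en e \<subseteq> S then 2 else 0)"
proof -
  obtain a b where ab: "en e = {a,b}" "a \<noteq> b" using mg_en(2)[OF assms] card2_obtain by metis
  show ?thesis using ab assms(2) unfolding cut_def by (cases "a \<in> S"; cases "b \<in> S"; auto)
qed

lemma handshake: fixes x :: "'e \<Rightarrow> real" assumes "mg V E en" "S \<subseteq> V"
  shows "(\<Sum>z\<in>S. sum x (inc E en z)) = sum x (cut E en S) + 2 * sum x {e\<in>E. en e \<subseteq> S}"
proof -
  have fS: "finite S" using assms mg_finite(1) finite_subset by blast
  have fE: "finite E" using assms mg_finite(2) by blast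
  have "(\<Sum>z\<in>S. sum x (inc E en z)) = (\<Sum>z\<in>S. \<Sum>e\<in>E. if z \<in> en e then x e else 0)"
    by (simp add: inc_def sum.inter_filter[OF fE, symmetric])
  also have "\<dots> = (\<Sum>e\<in>E. \<Sum>z\<in>S. if z \<in> en e then x e else 0)" by (rule sum.swap)
  also have "\<dots> = (\<Sum>e\<in>E. x e * real (card (en e \<inter> S)))"
  proof (rule sum.cong[OF refl])
    fix e assume "e \<in> E"
    have "(\<Sum>z\<in>S. if z \<in> en e then x e else 0) = (\<Sum>z\<in>{z\<in>S. z \<in> en e}. x e)"
      by (rule sum.inter_filter[OF fS, symmetric])
    also have "{z\<in>S. z \<in> en e} = en e \<inter> S" by blast
    finally show "(\<Sum>z\<in>S. if z \<in> en e then x e else 0) = x e * real (card (en e \<inter> S))" by simp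
  qed
  also have "\<dots> = (\<Sum>e\<in>E. (if e \<in> cut E en S then x e else 0) + 2 * (if en e \<subseteq> S then x e else 0))"
  proof (rule sum.cong[OF refl])
    fix e assume e: "e \<in> E"
    have "\<not> (e \<in> cut E en S \<and> en e \<subseteq> S)" unfolding cut_def by blast
    then show "x e * real (card (en e \<inter> S)) = (if e \<in> cut E en S then x e else 0) + 2 * (if en e \<subseteq> S then x e else 0)"
      using card_en_Int[OF assms(1) e, of S] by auto
  qed
  also have "\<dots> = sum x (cut E en S) + 2 * sum x {e\<in>E. en e \<subseteq> S}"
    by (simp add: sum.distrib sum_distrib_left[symmetric] sum.inter_filter[OF fE] cut_def)
  finally show ?thesis .
qed


definition ctrE :: "'e set \<Rightarrow> ('e \<Rightarrow> 'v set) \<Rightarrow> ('v \<Rightarrow> 'v) \<Rightarrow> 'e set" where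
  "ctrE E en f = {e\<in>E. card (f ` en e) = 2}"

definition ctren :: "('e \<Rightarrow> 'v set) \<Rightarrow> ('v \<Rightarrow> 'v) \<Rightarrow> 'e \<Rightarrow> 'v set" where
  "ctren en f = (\<lambda>e. f ` en e)"

definition kf :: "'v set \<Rightarrow> 'v \<Rightarrow> 'v \<Rightarrow> 'v" where
  "kf K r = (\<lambda>z. if z \<in> K then z else r)"

lemma cut_ctr: assumes "mg V E en"
  shows "cut (ctrE E en f) (ctren en f) S' = cut E en (V \<inter> f -` S')"
proof -
  have "e \<in> cut (ctrE E en f) (ctren en f) S' \<longleftrightarrow> e \<in> cut E en (V \<inter> f -` S')" for e
  proof (cases "e \<in> E")
    case True
    have sub: "en e \<subseteq> V" and c2: "card (en e) = 2" using mg_en[OF assms True] by auto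
    have fin: "finite (en e)" using c2 card.infinite by fastforce
    have le: "card (f ` en e) \<le> 2" using card_image_le[OF fin, of f] c2 by simp
    have "f ` en e \<inter> S' \<noteq> {} \<and> \<not> f ` en e \<subseteq> S' \<Longrightarrow> card (f ` en e) = 2"
    proof -
      assume a: "f ` en e \<inter> S' \<noteq> {} \<and> \<not> f ` en e \<subseteq> S'"
      then obtain p q where "p \<in> f ` en e" "p \<in> S'" "q \<in> f ` en e" "q \<notin> S'" by blast
      then have "{p,q} \<subseteq> f ` en e" "p \<noteq> q" by auto
      then have "card {p,q} \<le> card (f ` en e)" using fin by (intro card_mono) auto
      with \<open>p \<noteq> q\<close> le show ?thesis by simp
    qed
    moreover have "e \<in> cut (ctrE E en f) (ctren en f) S' \<longleftrightarrow>
        card (f ` en e) = 2 \<and> f ` en e \<inter> S' \<noteq> {} \<and> \<not> f ` en e \<subseteq> S'"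
      using True by (simp add: cut_def ctrE_def ctren_def)
    moreover have "e \<in> cut E en (V \<inter> f -` S') \<longleftrightarrow> f ` en e \<inter> S' \<noteq> {} \<and> \<not> f ` en e \<subseteq> S'"
      using True sub by (auto simp: cut_def)
    ultimately show ?thesis by blast
  next
    case False then show ?thesis unfolding cut_def ctrE_def by blast
  qed
  then show ?thesis by blast
qed

lemma mg_ctr: assumes "mg V E en" "finite V'" "f ` V \<subseteq> V'"
  shows "mg V' (ctrE E en f) (ctren en f)"
proof -
  have "f ` en e \<subseteq> V'" if "e \<in> E" for e using assms(1,3) that by (meson image_mono mg_en(1) order_trans)
  then show ?thesis using assms(1,2) unfolding mg_def ctrE_def ctren_def by auto
qed

lemma inP_kf:
  assumes mg: "mg V E en" and P: "inP V E en x" and K: "K \<subseteq> V" "r \<in> V - K"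
    and odd: "odd (card (V - K))" and tight: "sum x (cut E en K) = 1"
  shows "mg (insert r K) (ctrE E en (kf K r)) (ctren en (kf K r))"
    "inP (insert r K) (ctrE E en (kf K r)) (ctren en (kf K r)) x"
proof -
  have fV: "finite V" using mg mg_finite by blast
  have fK: "finite K" using K fV finite_subset by blast
  show mg': "mg (insert r K) (ctrE E en (kf K r)) (ctren en (kf K r))"
    by (rule mg_ctr[OF mg]) (use fK K in \<open>auto simp: kf_def\<close>)
  have pre: "V \<inter> kf K r -` S' = (S' \<inter> K) \<union> (if r \<in> S' then V - K else {})" for S'
    using K by (auto simp: kf_def split: if_splits)
  have E': "ctrE E en (kf K r) \<subseteq> E" by (auto simp: ctrE_def)
  show "inP (insert r K) (ctrE E en (kf K r)) (ctren en (kf K r)) x"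
    unfolding inP_def
  proof (intro conjI ballI allI impI)
    fix e assume "e \<in> ctrE E en (kf K r)" then show "0 \<le> x e" using P E' by (auto simp: inP_def)
  next
    fix v assume v: "v \<in> insert r K"
    have "inc (ctrE E en (kf K r)) (ctren en (kf K r)) v = cut E en (V \<inter> kf K r -` {v})"
      unfolding inc_cut[OF mg'] by (rule cut_ctr[OF mg])
    also have "\<dots> = (if v = r then cut E en K else inc E en v)"
    proof (cases "v = r")
      case True
      have "V \<inter> kf K r -` {v} = V - K" using pre[of "{v}"] K True by auto
      then show ?thesis using cut_compl[OF mg K(1)] True by simp
    next
      case False
      then have "V \<inter> kf K r -` {v} = {v}" using pre[of "{v}"] v K by auto
      then show ?thesis using False inc_cut[OF mg] by auto
    qed
    moreover have "\<forall>v\<in>V. sum x (inc E en v) = 1" using P by (simp add: inP_def)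
    ultimately show "sum x (inc (ctrE E en (kf K r)) (ctren en (kf K r)) v) = 1"
      using tight v K by auto
  next
    fix S' assume S': "S' \<subseteq> insert r K" "odd (card S')"
    have "cut (ctrE E en (kf K r)) (ctren en (kf K r)) S' = cut E en (V \<inter> kf K r -` S')"
      by (rule cut_ctr[OF mg])
    moreover have "odd (card (V \<inter> kf K r -` S'))"
    proof -
      have fS: "finite (S' \<inter> K)" using fK by blast
      have c1: "card S' = card (S' \<inter> K) + (if r \<in> S' then 1 else 0)"
      proof (cases "r \<in> S'")
        case True
        then have "S' = insert r (S' \<inter> K)" using S'(1) by blast
        moreover have "r \<notin> S' \<inter> K" using K by blast
        ultimately have "card S' = Suc (card (S' \<inter> K))" using card_insert_disjoint[OF fS] by metis
        then show ?thesis using True by simp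
      next
        case False then have "S' = S' \<inter> K" using S'(1) by blast
        then show ?thesis using False by simp
      qed
      have c2: "card (V \<inter> kf K r -` S') = card (S' \<inter> K) + (if r \<in> S' then card (V - K) else 0)"
      proof (cases "r \<in> S'")
        case True
        have "card ((S' \<inter> K) \<union> (V - K)) = card (S' \<inter> K) + card (V - K)"
          by (rule card_Un_disjoint) (use fS fV in auto)
        then show ?thesis unfolding pre using True by simp
      next
        case False then show ?thesis unfolding pre by simp
      qed
      show ?thesis using c1 c2 S'(2) odd by auto
    qed
    moreover have "V \<inter> kf K r -` S' \<subseteq> V" by blast
    moreover have "\<forall>S. S \<subseteq> V \<longrightarrow> odd (card S) \<longrightarrow> 1 \<le> sum x (cut E en S)"
      using P unfolding inP_def by blast
    ultimately show "1 \<le> sum x (cut (ctrE E en (kf K r)) (ctren en (kf K r)) S')"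
      by metis
  qed
qed


lemma glue_sum:
  fixes c1 c2 :: "'e set \<Rightarrow> real" and x :: "'e \<Rightarrow> real"
  assumes fE: "finite E" and EU: "E1 \<union> E2 = E" and C: "C = E1 \<inter> E2"
  shows "(\<Sum>M\<in>{M\<in>Pow E. Q (M\<inter>E1) \<and> R (M\<inter>E2)}. \<Sum>f\<in>C. if M \<inter> C = {f} then c1 (M\<inter>E1) * c2 (M\<inter>E2) / x f else 0)
     = (\<Sum>f\<in>C. (\<Sum>A\<in>{A\<in>Pow E1. Q A \<and> A \<inter> C = {f}}. c1 A) * (\<Sum>B\<in>{B\<in>Pow E2. R B \<and> B \<inter> C = {f}}. c2 B) / x f)"
proof -
  have fE1: "finite E1" and fE2: "finite E2" using fE EU by auto
  have fC: "finite C" using C fE1 by auto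
  let ?X = "{M\<in>Pow E. Q (M\<inter>E1) \<and> R (M\<inter>E2)}"
  have fX: "finite ?X" using fE by auto
  have "(\<Sum>M\<in>?X. \<Sum>f\<in>C. if M \<inter> C = {f} then c1 (M\<inter>E1) * c2 (M\<inter>E2) / x f else 0)
     = (\<Sum>f\<in>C. \<Sum>M\<in>?X. if M \<inter> C = {f} then c1 (M\<inter>E1) * c2 (M\<inter>E2) / x f else 0)"
    by (rule sum.swap)
  also have "\<dots> = (\<Sum>f\<in>C. (\<Sum>A\<in>{A\<in>Pow E1. Q A \<and> A \<inter> C = {f}}. c1 A) * (\<Sum>B\<in>{B\<in>Pow E2. R B \<and> B \<inter> C = {f}}. c2 B) / x f)"
  proof (rule sum.cong[OF refl])
    fix f assume f: "f \<in> C"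
    let ?A = "{A\<in>Pow E1. Q A \<and> A \<inter> C = {f}}" and ?B = "{B\<in>Pow E2. R B \<and> B \<inter> C = {f}}"
    let ?Xf = "{M\<in>?X. M \<inter> C = {f}}"
    have "(\<Sum>M\<in>?X. if M \<inter> C = {f} then c1 (M\<inter>E1) * c2 (M\<inter>E2) / x f else 0)
        = (\<Sum>M\<in>?Xf. c1 (M\<inter>E1) * c2 (M\<inter>E2) / x f)"
      by (rule sum.inter_filter[OF fX, symmetric])
    also have "?Xf = (\<lambda>(A,B). A \<union> B) ` (?A \<times> ?B)"
    proof (intro equalityI subsetI)
      fix M assume M: "M \<in> ?Xf"
      then have "M = (M \<inter> E1) \<union> (M \<inter> E2)" using EU by auto
      moreover have "(M \<inter> E1, M \<inter> E2) \<in> ?A \<times> ?B" using M C by auto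
      ultimately show "M \<in> (\<lambda>(A,B). A \<union> B) ` (?A \<times> ?B)" by (metis (no_types, lifting) case_prod_conv image_eqI)
    next
      fix M assume "M \<in> (\<lambda>(A,B). A \<union> B) ` (?A \<times> ?B)"
      then obtain A B where M: "M = A \<union> B" and A: "A \<in> ?A" and B: "B \<in> ?B" by auto
      have fA: "f \<in> A" "f \<in> B" using A B by auto
      have "B \<inter> E1 \<subseteq> {f}" "A \<inter> E2 \<subseteq> {f}" using A B C by auto
      then have "M \<inter> E1 = A" "M \<inter> E2 = B" using A B M fA by auto
      then show "M \<in> ?Xf" using A B M EU C by auto
    qed
    also have "(\<Sum>M\<in>(\<lambda>(A,B). A \<union> B) ` (?A \<times> ?B). c1 (M\<inter>E1) * c2 (M\<inter>E2) / x f)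
       = (\<Sum>p\<in>?A \<times> ?B. c1 (fst p) * c2 (snd p) / x f)"
    proof -
      have inj: "inj_on (\<lambda>(A,B). A \<union> B) (?A \<times> ?B)"
      proof (rule inj_onI)
        fix p q assume hp: "p \<in> ?A \<times> ?B" "q \<in> ?A \<times> ?B" "(\<lambda>(A,B). A \<union> B) p = (\<lambda>(A,B). A \<union> B) q"
        obtain A B where p: "p = (A,B)" by (cases p)
        obtain A' B' where q: "q = (A',B')" by (cases q)
        have h: "A \<in> ?A" "B \<in> ?B" "A' \<in> ?A" "B' \<in> ?B" "A \<union> B = A' \<union> B'" using hp p q by auto
        have fA: "f \<in> A" "f \<in> B" "f \<in> A'" "f \<in> B'" using h by auto
        have "B \<inter> E1 \<subseteq> {f}" "A \<inter> E2 \<subseteq> {f}" "B' \<inter> E1 \<subseteq> {f}" "A' \<inter> E2 \<subseteq> {f}" using h C by auto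
        then have "A = (A \<union> B) \<inter> E1" "A' = (A' \<union> B') \<inter> E1" "B = (A \<union> B) \<inter> E2" "B' = (A' \<union> B') \<inter> E2"
          using h fA by auto
        then show "p = q" using h(5) p q by metis
      qed
      have "(\<Sum>p\<in>?A \<times> ?B. ((\<lambda>M. c1 (M\<inter>E1) * c2 (M\<inter>E2) / x f) \<circ> (\<lambda>(A,B). A \<union> B)) p)
         = (\<Sum>p\<in>?A \<times> ?B. c1 (fst p) * c2 (snd p) / x f)"
      proof (rule sum.cong[OF refl])
        fix p assume hp: "p \<in> ?A \<times> ?B"
        obtain A B where p: "p = (A,B)" by (cases p)
        have h: "A \<in> ?A" "B \<in> ?B" using hp p by auto
        have fA: "f \<in> A" "f \<in> B" using h by auto
        have "B \<inter> E1 \<subseteq> {f}" "A \<inter> E2 \<subseteq> {f}" using h C by auto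
        then have "(A \<union> B) \<inter> E1 = A" "(A \<union> B) \<inter> E2 = B" using h fA by auto
        then show "((\<lambda>M. c1 (M\<inter>E1) * c2 (M\<inter>E2) / x f) \<circ> (\<lambda>(A,B). A \<union> B)) p = c1 (fst p) * c2 (snd p) / x f"
          using p by simp
      qed
      then show ?thesis by (simp only: sum.reindex[OF inj])
    qed
    also have "\<dots> = (\<Sum>A\<in>?A. \<Sum>B\<in>?B. c1 A * c2 B / x f)"
      by (subst sum.cartesian_product) (simp add: case_prod_beta)
    also have "\<dots> = (\<Sum>A\<in>?A. c1 A) * (\<Sum>B\<in>?B. c2 B) / x f"
      by (simp add: sum_product sum_divide_distrib)
    finally show "(\<Sum>M\<in>?X. if M \<inter> C = {f} then c1 (M\<inter>E1) * c2 (M\<inter>E2) / x f else 0)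
        = (\<Sum>A\<in>?A. c1 A) * (\<Sum>B\<in>?B. c2 B) / x f" .
  qed
  finally show ?thesis .
qed

lemma sum_unique_f:
  fixes g :: "'b \<Rightarrow> real"
  assumes fX: "finite X" and fC: "finite C"
    and u: "\<And>A. A \<in> X \<Longrightarrow> g A \<noteq> 0 \<Longrightarrow> \<exists>f\<in>C. h A = {f}"
  shows "(\<Sum>f\<in>C. \<Sum>A\<in>{A\<in>X. h A = {f}}. g A) = sum g X"
proof -
  have "(\<Sum>f\<in>C. \<Sum>A\<in>{A\<in>X. h A = {f}}. g A) = (\<Sum>f\<in>C. \<Sum>A\<in>X. if h A = {f} then g A else 0)"
    by (simp add: sum.inter_filter[OF fX])
  also have "\<dots> = (\<Sum>A\<in>X. \<Sum>f\<in>C. if h A = {f} then g A else 0)" by (rule sum.swap)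
  also have "\<dots> = (\<Sum>A\<in>X. g A)"
  proof (rule sum.cong[OF refl])
    fix A assume A: "A \<in> X"
    show "(\<Sum>f\<in>C. if h A = {f} then g A else 0) = g A"
    proof (cases "g A = 0")
      case True then show ?thesis by (simp cong: if_cong)
    next
      case False
      then obtain f where f: "f \<in> C" "h A = {f}" using u A by blast
      have "(\<Sum>f'\<in>C. if h A = {f'} then g A else 0) = (\<Sum>f'\<in>C. if f' = f then g A else 0)"
        by (rule sum.cong) (use f in auto)
      also have "\<dots> = g A" using f fC by simp
      finally show ?thesis .
    qed
  qed
  finally show ?thesis .
qed


lemma kf_facts:
  assumes mg: "mg V E en" and K: "K \<subseteq> V" "r \<in> V - K"
  shows "ctrE E en (kf K r) = {e\<in>E. en e \<inter> K \<noteq> {}}"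
    and "v \<in> K \<Longrightarrow> M \<subseteq> E \<Longrightarrow> inc M (ctren en (kf K r)) v = inc M en v"
    and "M \<subseteq> ctrE E en (kf K r) \<Longrightarrow> inc M (ctren en (kf K r)) r = M \<inter> cut E en K"
proof -
  have ctr: "e \<in> ctrE E en (kf K r) \<longleftrightarrow> e \<in> E \<and> en e \<inter> K \<noteq> {}" for e
  proof (cases "e \<in> E")
    case True
    obtain a b where ab: "en e = {a,b}" "a \<noteq> b" using mg_en(2)[OF mg True] card2_obtain by metis
    have "kf K r ` en e = {kf K r a, kf K r b}" using ab by auto
    then have "card (kf K r ` en e) = 2 \<longleftrightarrow> kf K r a \<noteq> kf K r b" by (simp add: card_insert_if)
    also have "\<dots> \<longleftrightarrow> en e \<inter> K \<noteq> {}" using ab K by (auto simp: kf_def)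
    finally show ?thesis using True by (simp add: ctrE_def)
  next
    case False then show ?thesis by (simp add: ctrE_def)
  qed
  then show "ctrE E en (kf K r) = {e\<in>E. en e \<inter> K \<noteq> {}}" by blast
  show "v \<in> K \<Longrightarrow> M \<subseteq> E \<Longrightarrow> inc M (ctren en (kf K r)) v = inc M en v"
    using K by (auto simp: inc_def ctren_def kf_def split: if_splits)
  show "M \<subseteq> ctrE E en (kf K r) \<Longrightarrow> inc M (ctren en (kf K r)) r = M \<inter> cut E en K"
  proof -
    assume M: "M \<subseteq> ctrE E en (kf K r)"
    have "e \<in> inc M (ctren en (kf K r)) r \<longleftrightarrow> e \<in> M \<inter> cut E en K" for e
    proof (cases "e \<in> M")
      case True
      then have eE: "e \<in> E" "en e \<inter> K \<noteq> {}" using M ctr by auto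
      have "en e \<subseteq> V" using mg_en(1)[OF mg eE(1)] .
      then have "r \<in> kf K r ` en e \<longleftrightarrow> \<not> en e \<subseteq> K" using K by (auto simp: kf_def split: if_splits)
      then show ?thesis using True eE by (simp add: inc_def ctren_def cut_def)
    next
      case False then show ?thesis by (simp add: inc_def)
    qed
    then show ?thesis by blast
  qed
qed

lemma sum_filter_cong:
  fixes g :: "'b \<Rightarrow> real"
  assumes "finite X" "\<And>A. A \<in> X \<Longrightarrow> g A \<noteq> 0 \<Longrightarrow> (P A \<longleftrightarrow> Q A)"
  shows "sum g {A\<in>X. P A} = sum g {A\<in>X. Q A}"
proof -
  have "sum g {A\<in>X. P A} = (\<Sum>A\<in>X. if P A then g A else 0)" by (rule sum.inter_filter[OF assms(1)])
  also have "\<dots> = (\<Sum>A\<in>X. if Q A then g A else 0)"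
    by (rule sum.cong[OF refl]) (use assms(2) in \<open>auto\<close>)
  also have "\<dots> = sum g {A\<in>X. Q A}" by (rule sum.inter_filter[OF assms(1), symmetric])
  finally show ?thesis .
qed

lemma pm_cut_card:
  assumes mg: "mg V E en" and K: "K \<subseteq> V" "r \<in> V - K"
    and pm: "pm (insert r K) (ctrE E en (kf K r)) (ctren en (kf K r)) B"
  shows "card (B \<inter> cut E en K) = 1"
proof -
  have "B \<subseteq> ctrE E en (kf K r)" using pm by (simp add: pm_def)
  then have "inc B (ctren en (kf K r)) r = B \<inter> cut E en K" using kf_facts(3)[OF mg K] by blast
  moreover have "card (inc B (ctren en (kf K r)) r) = 1" using pm by (simp add: pm_def)
  ultimately show ?thesis by simp
qed

lemma card1_iff: assumes "card X = 1" "f \<in> C" "X \<subseteq> C" shows "X = {f} \<longleftrightarrow> f \<in> X"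
  using assms by (metis card_1_singletonE singletonD singletonI)

lemma glue:
  assumes mg: "mg V E en" and P: "inP V E en x" and pos: "\<forall>e\<in>E. 0 < x e"
    and S: "S \<subseteq> V" and r1: "r1 \<in> V - S" and r2: "r2 \<in> S"
    and tight: "sum x (cut E en S) = 1"
    and D1: "decomp (insert r1 S) (ctrE E en (kf S r1)) (ctren en (kf S r1)) x"
    and D2: "decomp (insert r2 (V - S)) (ctrE E en (kf (V - S) r2)) (ctren en (kf (V - S) r2)) x"
  shows "decomp V E en x"
proof -
  define E1 where "E1 = ctrE E en (kf S r1)"
  define E2 where "E2 = ctrE E en (kf (V - S) r2)"
  define C where "C = cut E en S"
  have S2: "V - S \<subseteq> V" "r2 \<in> V - (V - S)" using S r2 by auto
  have fE: "finite E" using mg mg_finite by blast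
  have E1: "E1 = {e\<in>E. en e \<inter> S \<noteq> {}}" unfolding E1_def using kf_facts(1)[OF mg S r1] .
  have E2: "E2 = {e\<in>E. en e \<inter> (V - S) \<noteq> {}}" unfolding E2_def using kf_facts(1)[OF mg S2] .
  have enV: "\<And>e. e \<in> E \<Longrightarrow> en e \<subseteq> V" using mg_en(1)[OF mg] .
  have ne: "\<And>e. e \<in> E \<Longrightarrow> en e \<noteq> {}" using mg_en(2)[OF mg] by fastforce
  have EU: "E1 \<union> E2 = E" unfolding E1 E2 using enV ne by blast
  have CI: "C = E1 \<inter> E2" unfolding E1 E2 C_def cut_def using enV by blast
  have fC: "finite C" using CI EU fE by auto
  have CC: "cut E en (V - S) = C" unfolding C_def by (rule cut_compl[OF mg S])
  obtain c1 where c1: "\<forall>M. 0 \<le> c1 M" "\<forall>M. c1 M \<noteq> 0 \<longrightarrow> pm (insert r1 S) E1 (ctren en (kf S r1)) M"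
    "sum c1 (Pow E1) = 1" "\<forall>e\<in>E1. sum c1 {M\<in>Pow E1. e \<in> M} = x e"
    using D1 unfolding decomp_def E1_def by blast
  obtain c2 where c2: "\<forall>M. 0 \<le> c2 M" "\<forall>M. c2 M \<noteq> 0 \<longrightarrow> pm (insert r2 (V - S)) E2 (ctren en (kf (V - S) r2)) M"
    "sum c2 (Pow E2) = 1" "\<forall>e\<in>E2. sum c2 {M\<in>Pow E2. e \<in> M} = x e"
    using D2 unfolding decomp_def E2_def by blast
  have u1: "\<And>A. c1 A \<noteq> 0 \<Longrightarrow> card (A \<inter> C) = 1"
    using pm_cut_card[OF mg S r1] c2 c1(2) unfolding E1_def C_def by blast
  have u2: "\<And>B. c2 B \<noteq> 0 \<Longrightarrow> card (B \<inter> C) = 1"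
    using pm_cut_card[OF mg S2] c2(2) CC unfolding E2_def by metis
  have xf1: "sum c1 {A\<in>Pow E1. Q A \<and> A \<inter> C = {f}} = sum c1 {A\<in>Pow E1. Q A \<and> f \<in> A}" if f: "f \<in> C" for Q f
    by (rule sum_filter_cong) (use fE EU u1 card1_iff[OF _ f] f in auto)
  have xf2: "sum c2 {B\<in>Pow E2. B \<inter> C = {f}} = x f" if f: "f \<in> C" for f
  proof -
    have "sum c2 {B\<in>Pow E2. B \<inter> C = {f}} = sum c2 {B\<in>Pow E2. f \<in> B}"
      by (rule sum_filter_cong) (use fE EU u2 card1_iff[OF _ f] f in auto)
    then show ?thesis using c2(4) f CI by auto
  qed
  have xf2': "sum c2 {B\<in>Pow E2. Q B \<and> B \<inter> C = {f}} = sum c2 {B\<in>Pow E2. Q B \<and> f \<in> B}" if f: "f \<in> C" for Q f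
    by (rule sum_filter_cong) (use fE EU u2 card1_iff[OF _ f] f in auto)
  have xf1': "sum c1 {A\<in>Pow E1. A \<inter> C = {f}} = x f" if f: "f \<in> C" for f
  proof -
    have "sum c1 {A\<in>Pow E1. A \<inter> C = {f}} = sum c1 {A\<in>Pow E1. f \<in> A}"
      by (rule sum_filter_cong) (use fE EU u1 card1_iff[OF _ f] f in auto)
    then show ?thesis using c1(4) f CI by auto
  qed
  define c where "c M = (if M \<subseteq> E then (\<Sum>f\<in>C. if M \<inter> C = {f} then c1 (M\<inter>E1) * c2 (M\<inter>E2) / x f else 0) else 0)" for M
  have GS: "(\<Sum>M\<in>{M\<in>Pow E. Q (M\<inter>E1) \<and> R (M\<inter>E2)}. c M)
     = (\<Sum>f\<in>C. (\<Sum>A\<in>{A\<in>Pow E1. Q A \<and> A \<inter> C = {f}}. c1 A) * (\<Sum>B\<in>{B\<in>Pow E2. R B \<and> B \<inter> C = {f}}. c2 B) / x f)" for Q R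
  proof -
    have "(\<Sum>M\<in>{M\<in>Pow E. Q (M\<inter>E1) \<and> R (M\<inter>E2)}. c M) =
      (\<Sum>M\<in>{M\<in>Pow E. Q (M\<inter>E1) \<and> R (M\<inter>E2)}. \<Sum>f\<in>C. if M \<inter> C = {f} then c1 (M\<inter>E1) * c2 (M\<inter>E2) / x f else 0)"
      by (rule sum.cong[OF refl]) (simp add: c_def)
    then show ?thesis using glue_sum[OF fE EU CI] by simp
  qed
  have xpos: "\<And>f. f \<in> C \<Longrightarrow> 0 < x f" using pos CI EU by auto
  show ?thesis unfolding decomp_def
  proof (intro exI conjI allI impI ballI)
    fix M show "0 \<le> c M" unfolding c_def using c1(1) c2(1) xpos
      by (auto intro!: sum_nonneg divide_nonneg_pos)
  next
    fix M assume cM: "c M \<noteq> 0"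
    then have ME: "M \<subseteq> E" by (simp add: c_def split: if_splits)
    from cM obtain f where f: "f \<in> C" "c1 (M\<inter>E1) \<noteq> 0" "c2 (M\<inter>E2) \<noteq> 0"
      unfolding c_def by (smt (verit, ccfv_threshold) div_0 mult_eq_0_iff sum.neutral)
    have p1: "pm (insert r1 S) E1 (ctren en (kf S r1)) (M\<inter>E1)" using c1(2) f by blast
    have p2: "pm (insert r2 (V - S)) E2 (ctren en (kf (V - S) r2)) (M\<inter>E2)" using c2(2) f by blast
    show "pm V E en M" unfolding pm_def
    proof (intro conjI ballI ME)
      fix v assume v: "v \<in> V"
      show "card (inc M en v) = 1"
      proof (cases "v \<in> S")
        case True
        have "inc M en v = inc (M \<inter> E1) en v" using ME True unfolding E1 inc_def by auto
        also have "\<dots> = inc (M \<inter> E1) (ctren en (kf S r1)) v"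
          using kf_facts(2)[OF mg S r1 True, of "M \<inter> E1"] ME by auto
        finally show ?thesis using p1 True by (simp add: pm_def)
      next
        case False
        then have vS: "v \<in> V - S" using v by blast
        have "inc M en v = inc (M \<inter> E2) en v" using ME vS unfolding E2 inc_def by auto
        also have "\<dots> = inc (M \<inter> E2) (ctren en (kf (V - S) r2)) v"
          using kf_facts(2)[OF mg S2 vS, of "M \<inter> E2"] ME by auto
        finally show ?thesis using p2 vS by (simp add: pm_def)
      qed
    qed
  next
    have "sum c (Pow E) = (\<Sum>M\<in>{M\<in>Pow E. True \<and> True}. c M)" by (simp add: Pow_def)
    also have "\<dots> = (\<Sum>f\<in>C. (\<Sum>A\<in>{A\<in>Pow E1. True \<and> A \<inter> C = {f}}. c1 A) * (\<Sum>B\<in>{B\<in>Pow E2. True \<and> B \<inter> C = {f}}. c2 B) / x f)"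
      by (rule GS)
    also have "\<dots> = (\<Sum>f\<in>C. x f * x f / x f)"
      by (rule sum.cong[OF refl]) (use xf1'  xf2 in simp)
    also have "\<dots> = sum x C" using xpos by (intro sum.cong) auto
    finally show "sum c (Pow E) = 1" using tight C_def by simp
  next
    fix e assume e: "e \<in> E"
    show "sum c {M\<in>Pow E. e \<in> M} = x e"
    proof (cases "e \<in> E1")
      case True
      have "sum c {M\<in>Pow E. e \<in> M} = (\<Sum>M\<in>{M\<in>Pow E. e \<in> M \<inter> E1 \<and> True}. c M)"
        using True by (intro sum.cong) auto
      also have "\<dots> = (\<Sum>f\<in>C. (\<Sum>A\<in>{A\<in>Pow E1. e \<in> A \<and> A \<inter> C = {f}}. c1 A) * (\<Sum>B\<in>{B\<in>Pow E2. True \<and> B \<inter> C = {f}}. c2 B) / x f)"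
        by (rule GS)
      also have "\<dots> = (\<Sum>f\<in>C. (\<Sum>A\<in>{A\<in>Pow E1. e \<in> A \<and> A \<inter> C = {f}}. c1 A))"
        by (rule sum.cong[OF refl]) (use xf2 xpos in \<open>auto simp: less_imp_neq[symmetric]\<close>)
      also have "\<dots> = (\<Sum>f\<in>C. (\<Sum>A\<in>{A\<in>{A\<in>Pow E1. e \<in> A}. A \<inter> C = {f}}. c1 A))"
        by (intro sum.cong refl arg_cong[where f="sum c1"]) auto
      also have "\<dots> = sum c1 {A\<in>Pow E1. e \<in> A}"
      proof (rule sum_unique_f)
        show "finite {A \<in> Pow E1. e \<in> A}" using fE EU by auto
        show "finite C" by (rule fC)
        fix A assume "A \<in> {A \<in> Pow E1. e \<in> A}" "c1 A \<noteq> 0"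
        then have "card (A \<inter> C) = 1" using u1 by blast
        then obtain f where "A \<inter> C = {f}" by (meson card_1_singletonE)
        then show "\<exists>f\<in>C. A \<inter> C = {f}" by blast
      qed
      also have "\<dots> = x e" using c1(4) True by blast
      finally show ?thesis .
    next
      case False
      then have e2: "e \<in> E2" using e EU by blast
      have "sum c {M\<in>Pow E. e \<in> M} = (\<Sum>M\<in>{M\<in>Pow E. True \<and> e \<in> M \<inter> E2}. c M)"
        using e2 by (intro sum.cong) auto
      also have "\<dots> = (\<Sum>f\<in>C. (\<Sum>A\<in>{A\<in>Pow E1. True \<and> A \<inter> C = {f}}. c1 A) * (\<Sum>B\<in>{B\<in>Pow E2. e \<in> B \<and> B \<inter> C = {f}}. c2 B) / x f)"
        by (rule GS)
      also have "\<dots> = (\<Sum>f\<in>C. (\<Sum>B\<in>{B\<in>Pow E2. e \<in> B \<and> B \<inter> C = {f}}. c2 B))"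
        by (rule sum.cong[OF refl]) (use xf1' xpos in \<open>auto simp: less_imp_neq[symmetric]\<close>)
      also have "\<dots> = (\<Sum>f\<in>C. (\<Sum>B\<in>{B\<in>{B\<in>Pow E2. e \<in> B}. B \<inter> C = {f}}. c2 B))"
        by (intro sum.cong refl arg_cong[where f="sum c2"]) auto
      also have "\<dots> = sum c2 {B\<in>Pow E2. e \<in> B}"
      proof (rule sum_unique_f)
        show "finite {B \<in> Pow E2. e \<in> B}" using fE EU by auto
        show "finite C" by (rule fC)
        fix B assume "B \<in> {B \<in> Pow E2. e \<in> B}" "c2 B \<noteq> 0"
        then have "card (B \<inter> C) = 1" using u2 by blast
        then obtain f where "B \<inter> C = {f}" by (meson card_1_singletonE)
        then show "\<exists>f\<in>C. B \<inter> C = {f}" by blast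
      qed
      also have "\<dots> = x e" using c2(4) e2 by blast
      finally show ?thesis .
    qed
  qed
qed


lemma del_edge:
  assumes mg: "mg V E en" and P: "inP V E en x" and e0: "e0 \<in> E" "x e0 = 0"
  shows "mg V (E - {e0}) en" "inP V (E - {e0}) en x"
    "decomp V (E - {e0}) en x \<Longrightarrow> decomp V E en x"
proof -
  have fE: "finite E" using mg mg_finite by blast
  show "mg V (E - {e0}) en" using mg unfolding mg_def by auto
  have s: "sum x (A - {e0}) = sum x A" if "A \<subseteq> E" for A
    using that fE e0(2) by (metis finite_subset sum_diff1 diff_zero)
  have i: "inc (E - {e0}) en v = inc E en v - {e0}" for v by (auto simp: inc_def)
  have c: "cut (E - {e0}) en S = cut E en S - {e0}" for S by (auto simp: cut_def)
  show "inP V (E - {e0}) en x" using P unfolding inP_def i c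
    by (simp add: s inc_def cut_def)
  assume "decomp V (E - {e0}) en x"
  then obtain c where c: "\<forall>M. 0 \<le> c M" "\<forall>M. c M \<noteq> 0 \<longrightarrow> pm V (E - {e0}) en M"
    "sum c (Pow (E - {e0})) = 1" "\<forall>e\<in>E - {e0}. sum c {M\<in>Pow (E - {e0}). e \<in> M} = x e"
    unfolding decomp_def by blast
  have z: "\<And>M. M \<in> Pow E \<Longrightarrow> M \<notin> Pow (E - {e0}) \<Longrightarrow> c M = 0" using c(2) by (auto simp: pm_def)
  show "decomp V E en x" unfolding decomp_def
  proof (intro exI[of _ c] conjI allI impI ballI)
    show "0 \<le> c M" for M using c(1) by blast
    show "pm V E en M" if "c M \<noteq> 0" for M using c(2) that by (auto simp: pm_def)
    have "sum c (Pow E) = sum c (Pow (E - {e0}))"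
      by (rule sum.mono_neutral_right) (use fE z in auto)
    then show "sum c (Pow E) = 1" using c(3) by simp
    fix e assume e: "e \<in> E"
    show "sum c {M \<in> Pow E. e \<in> M} = x e"
    proof (cases "e = e0")
      case True
      have "sum c {M \<in> Pow E. e \<in> M} = 0" using z True by (intro sum.neutral) auto
      then show ?thesis using True e0 by simp
    next
      case False
      have "sum c {M \<in> Pow E. e \<in> M} = sum c {M\<in>Pow (E - {e0}). e \<in> M}"
        by (rule sum.mono_neutral_right) (use fE z in auto)
      then show ?thesis using c(4) e False by simp
    qed
  qed
qed

lemma sum_insert_reindex:
  fixes g :: "'e set \<Rightarrow> real"
  assumes "finite E" "e0 \<in> E"
  shows "(\<Sum>M\<in>{M\<in>Pow E. e0 \<in> M \<and> P M}. g (M - {e0})) = (\<Sum>M\<in>{M\<in>Pow (E - {e0}). P (insert e0 M)}. g M)"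
proof -
  have eq: "{M\<in>Pow E. e0 \<in> M \<and> P M} = insert e0 ` {M\<in>Pow (E - {e0}). P (insert e0 M)}"
  proof (intro equalityI subsetI)
    fix M assume M: "M \<in> {M\<in>Pow E. e0 \<in> M \<and> P M}"
    then have "M = insert e0 (M - {e0})" by auto
    moreover have "M - {e0} \<in> {M\<in>Pow (E - {e0}). P (insert e0 M)}" using M calculation by auto
    ultimately show "M \<in> insert e0 ` {M\<in>Pow (E - {e0}). P (insert e0 M)}" by blast
  qed (use assms in auto)
  have inj: "inj_on (insert e0) {M\<in>Pow (E - {e0}). P (insert e0 M)}"
    by (rule inj_onI) (metis (no_types, lifting) Diff_insert_absorb PowD mem_Collect_eq subset_Diff_insert)
  show ?thesis unfolding eq sum.reindex[OF inj]
  proof (rule sum.cong[OF refl])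
    fix M assume "M \<in> {M\<in>Pow (E - {e0}). P (insert e0 M)}"
    then have "e0 \<notin> M" by auto
    then show "((\<lambda>M. g (M - {e0})) \<circ> insert e0) M = g M" by simp
  qed
qed

lemma del_iso:
  assumes mg: "mg V E en" and P: "inP V E en x" and e0: "e0 \<in> E" "en e0 = {u,v}" "u \<noteq> v"
    and iu: "inc E en u = {e0}" and iv: "inc E en v = {e0}"
  shows "mg (V - {u,v}) (E - {e0}) en" "inP (V - {u,v}) (E - {e0}) en x"
    "decomp (V - {u,v}) (E - {e0}) en x \<Longrightarrow> decomp V E en x"
proof -
  have fE: "finite E" using mg mg_finite by blast
  have uvV: "u \<in> V" "v \<in> V" using mg_en(1)[OF mg e0(1)] e0(2) by auto
  have nuv: "u \<notin> en e" "v \<notin> en e" if "e \<in> E - {e0}" for e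
    using iu iv that unfolding inc_def by auto
  show mg': "mg (V - {u,v}) (E - {e0}) en" using mg nuv unfolding mg_def by blast
  have xe0: "x e0 = 1" using P iu uvV unfolding inP_def by auto
  show "inP (V - {u,v}) (E - {e0}) en x" unfolding inP_def
  proof (intro conjI ballI allI impI)
    show "0 \<le> x e" if "e \<in> E - {e0}" for e using P that by (auto simp: inP_def)
    fix w assume w: "w \<in> V - {u,v}"
    have "inc (E - {e0}) en w = inc E en w" using w e0 by (auto simp: inc_def)
    then show "sum x (inc (E - {e0}) en w) = 1" using P w by (auto simp: inP_def)
  next
    fix S assume S: "S \<subseteq> V - {u,v}" "odd (card S)"
    have "cut (E - {e0}) en S = cut E en S" using S e0 by (auto simp: cut_def)
    then show "1 \<le> sum x (cut (E - {e0}) en S)" using P S by (auto simp: inP_def)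
  qed
  assume "decomp (V - {u,v}) (E - {e0}) en x"
  then obtain c where c: "\<forall>M. 0 \<le> c M" "\<forall>M. c M \<noteq> 0 \<longrightarrow> pm (V - {u,v}) (E - {e0}) en M"
    "sum c (Pow (E - {e0})) = 1" "\<forall>e\<in>E - {e0}. sum c {M\<in>Pow (E - {e0}). e \<in> M} = x e"
    unfolding decomp_def by blast
  define c' where "c' M = (if e0 \<in> M then c (M - {e0}) else 0)" for M
  have S1: "(\<Sum>M\<in>{M\<in>Pow E. P' M}. c' M) = (\<Sum>M\<in>{M\<in>Pow (E - {e0}). P' (insert e0 M)}. c M)" for P'
  proof -
    have "(\<Sum>M\<in>{M\<in>Pow E. P' M}. c' M) = (\<Sum>M\<in>{M\<in>Pow E. e0 \<in> M \<and> P' M}. c (M - {e0}))"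
      unfolding c'_def by (rule sum.mono_neutral_cong_right) (use fE in auto)
    then show ?thesis using sum_insert_reindex[OF fE e0(1)] by simp
  qed
  show "decomp V E en x" unfolding decomp_def
  proof (intro exI[of _ c'] conjI allI impI ballI)
    show "0 \<le> c' M" for M using c(1) by (simp add: c'_def)
    show "pm V E en M" if "c' M \<noteq> 0" for M
    proof -
      have M: "e0 \<in> M" "pm (V - {u,v}) (E - {e0}) en (M - {e0})" using that c(2) by (auto simp: c'_def split: if_splits)
      then have ME: "M \<subseteq> E" using e0 by (auto simp: pm_def)
      show ?thesis unfolding pm_def
      proof (intro conjI ballI ME)
        fix w assume w: "w \<in> V"
        show "card (inc M en w) = 1"
        proof (cases "w \<in> {u,v}")
          case True
          then have "inc M en w = {e0}" using ME M(1) iu iv by (auto simp: inc_def)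
          then show ?thesis by simp
        next
          case False
          then have "inc M en w = inc (M - {e0}) en w" using e0 by (auto simp: inc_def)
          then show ?thesis using M(2) w False by (auto simp: pm_def)
        qed
      qed
    qed
    show "sum c' (Pow E) = 1" using S1[of "\<lambda>_. True"] c(3) by (simp add: Pow_def)
    fix e assume e: "e \<in> E"
    show "sum c' {M \<in> Pow E. e \<in> M} = x e"
    proof (cases "e = e0")
      case True
      then show ?thesis using S1[of "\<lambda>M. e \<in> M"] c(3) xe0 by (simp add: Pow_def)
    next
      case False
      then show ?thesis using S1[of "\<lambda>M. e \<in> M"] c(4) e by simp
    qed
  qed
qed

lemma decomp_convex:
  assumes D1: "decomp V E en x1" and D2: "decomp V E en x2" and l: "0 \<le> l" "l \<le> 1"
    and x: "\<forall>e\<in>E. x e = l * x1 e + (1 - l) * x2 e"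
  shows "decomp V E en x"
proof -
  obtain c1 where c1: "\<forall>M. 0 \<le> c1 M" "\<forall>M. c1 M \<noteq> 0 \<longrightarrow> pm V E en M"
    "sum c1 (Pow E) = 1" "\<forall>e\<in>E. sum c1 {M\<in>Pow E. e \<in> M} = x1 e" using D1 unfolding decomp_def by blast
  obtain c2 where c2: "\<forall>M. 0 \<le> c2 M" "\<forall>M. c2 M \<noteq> 0 \<longrightarrow> pm V E en M"
    "sum c2 (Pow E) = 1" "\<forall>e\<in>E. sum c2 {M\<in>Pow E. e \<in> M} = x2 e" using D2 unfolding decomp_def by blast
  show ?thesis unfolding decomp_def
  proof (intro exI[of _ "\<lambda>M. l * c1 M + (1 - l) * c2 M"] conjI allI impI ballI)
    show "0 \<le> l * c1 M + (1 - l) * c2 M" for M using c1(1) c2(1) l by simp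
    show "pm V E en M" if "l * c1 M + (1 - l) * c2 M \<noteq> 0" for M
      using that c1(2) c2(2) by (metis add.right_neutral mult_zero_right)
    show "(\<Sum>M\<in>Pow E. l * c1 M + (1 - l) * c2 M) = 1"
      using c1(3) c2(3) by (simp add: sum.distrib sum_distrib_left[symmetric])
    show "(\<Sum>M\<in>{M\<in>Pow E. e \<in> M}. l * c1 M + (1 - l) * c2 M) = x e" if "e \<in> E" for e
      using c1(4) c2(4) x that by (simp add: sum.distrib sum_distrib_left[symmetric])
  qed
qed

lemma decomp_empty:
  assumes mg: "mg {} E en" shows "decomp {} E en x"
proof -
  have E: "E = {}" using mg unfolding mg_def by fastforce
  show ?thesis unfolding decomp_def E
    by (intro exI[of _ "\<lambda>M. if M = {} then 1 else 0"]) (auto simp: pm_def)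
qed


lemma kernel_exists:
  fixes A :: "'v \<Rightarrow> 'e \<Rightarrow> real"
  assumes "finite V" "finite E" "card V < card E"
  shows "\<exists>y. (\<exists>e\<in>E. y e \<noteq> 0) \<and> (\<forall>v\<in>V. (\<Sum>e\<in>E. A v e * y e) = 0)"
  using assms
proof (induction V arbitrary: E A rule: finite_induct)
  case empty
  then obtain e0 where "e0 \<in> E" by fastforce
  then show ?case by (intro exI[of _ "\<lambda>e. if e = e0 then 1 else 0"]) auto
next
  case (insert v V)
  show ?case
  proof (cases "\<forall>e\<in>E. A v e = 0")
    case True
    have "card V < card E" using insert by simp
    then obtain y where y: "\<exists>e\<in>E. y e \<noteq> 0" "\<forall>w\<in>V. (\<Sum>e\<in>E. A w e * y e) = 0"
      using insert.IH[OF insert(4)] by blast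
    show ?thesis using y True by (intro exI[of _ y]) auto
  next
    case False
    then obtain e0 where e0: "e0 \<in> E" "A v e0 \<noteq> 0" by blast
    define A' where "A' w e = A w e - A w e0 * A v e / A v e0" for w e
    have fE': "finite (E - {e0})" using insert by simp
    have cE': "card V < card (E - {e0})" using insert e0 by (simp add: card_Diff_singleton)
    obtain y' where y': "\<exists>e\<in>E - {e0}. y' e \<noteq> 0" "\<forall>w\<in>V. (\<Sum>e\<in>E - {e0}. A' w e * y' e) = 0"
      using insert.IH[OF fE' cE'] by blast
    define s where "s = (\<Sum>e\<in>E - {e0}. A v e * y' e)"
    define y where "y e = (if e = e0 then - s / A v e0 else y' e)" for e
    have split: "(\<Sum>e\<in>E. A w e * y e) = A w e0 * y e0 + (\<Sum>e\<in>E - {e0}. A w e * y' e)" for w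
    proof -
      have "(\<Sum>e\<in>E. A w e * y e) = A w e0 * y e0 + (\<Sum>e\<in>E - {e0}. A w e * y e)"
        using e0(1) insert(4) by (simp add: sum.remove)
      also have "(\<Sum>e\<in>E - {e0}. A w e * y e) = (\<Sum>e\<in>E - {e0}. A w e * y' e)"
        by (rule sum.cong) (auto simp: y_def)
      finally show ?thesis .
    qed
    show ?thesis
    proof (intro exI[of _ y] conjI ballI)
      show "\<exists>e\<in>E. y e \<noteq> 0" using y' by (auto simp: y_def)
      fix w assume w: "w \<in> insert v V"
      show "(\<Sum>e\<in>E. A w e * y e) = 0"
      proof (cases "w = v")
        case True
        then show ?thesis unfolding split using e0 by (simp add: y_def s_def)
      next
        case False
        then have wV: "w \<in> V" using w by blast
        have "(\<Sum>e\<in>E - {e0}. A' w e * y' e) = (\<Sum>e\<in>E - {e0}. A w e * y' e) - A w e0 / A v e0 * s"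
          by (simp add: A'_def s_def left_diff_distrib sum_subtractf sum_distrib_left mult.assoc)
        then have "(\<Sum>e\<in>E - {e0}. A w e * y' e) = A w e0 / A v e0 * s" using y'(2) wV by simp
        then show ?thesis unfolding split using e0 by (simp add: y_def)
      qed
    qed
  qed
qed


lemma trivial_cut_zero:
  assumes mg: "mg V E en" and ker: "\<forall>v\<in>V. sum y (inc E en v) = 0" and S: "S \<subseteq> V"
    and nt: "\<not> (2 \<le> card S \<and> 2 \<le> card (V - S))" and odd: "odd (card S)"
  shows "sum y (cut E en S) = 0"
proof -
  have fV: "finite V" using mg mg_finite by blast
  consider "card S = 1" | "card (V - S) = 1" | "card (V - S) = 0" using nt odd
    by (metis One_nat_def card.empty dvd_0_right less_2_cases not_le)
  then show ?thesis
  proof cases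
    case 1
    then obtain v where "S = {v}" by (meson card_1_singletonE)
    then show ?thesis using ker S inc_cut[OF mg, of v] by auto
  next
    case 2
    then obtain v where v: "V - S = {v}" by (meson card_1_singletonE)
    have "cut E en S = cut E en {v}" using cut_compl[OF mg S] v by simp
    moreover have "v \<in> V" using v by blast
    ultimately show ?thesis using ker inc_cut[OF mg, of v] by auto
  next
    case 3
    then have "S = V" using fV S by auto
    then show ?thesis using cut_V[OF mg] by simp
  qed
qed

definition nontriv :: "'v set \<Rightarrow> 'v set \<Rightarrow> bool" where
  "nontriv V S \<longleftrightarrow> S \<subseteq> V \<and> odd (card S) \<and> 2 \<le> card S \<and> 2 \<le> card (V - S)"

lemma perturb:
  assumes mg: "mg V E en" and P: "inP V E en x" and pos: "\<forall>e\<in>E. 0 < x e"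
    and nt: "\<forall>S. nontriv V S \<longrightarrow> 1 < sum x (cut E en S)"
    and ker: "\<forall>v\<in>V. sum y (inc E en v) = 0" and e0: "e0 \<in> E" "y e0 < 0"
  shows "\<exists>t>0. inP V E en (\<lambda>e. x e + t * y e) \<and>
     ((\<exists>e\<in>E. x e + t * y e = 0) \<or> (\<exists>S. nontriv V S \<and> sum (\<lambda>e. x e + t * y e) (cut E en S) = 1))"
proof -
  have fV: "finite V" and fE: "finite E" using mg mg_finite by blast+
  define K1 where "K1 = (\<lambda>e. x e / (- y e)) ` {e\<in>E. y e < 0}"
  define K2 where "K2 = (\<lambda>S. (sum x (cut E en S) - 1) / (- sum y (cut E en S))) `
     {S. S \<subseteq> V \<and> odd (card S) \<and> sum y (cut E en S) < 0}"
  have Y: "nontriv V S" if "S \<subseteq> V" "odd (card S)" "sum y (cut E en S) < 0" for S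
    using trivial_cut_zero[OF mg ker that(1) _ that(2)] that(3) that unfolding nontriv_def by force
  have fin: "finite (K1 \<union> K2)" unfolding K1_def K2_def using fE fV by auto
  have ne: "K1 \<union> K2 \<noteq> {}" unfolding K1_def using e0 by auto
  define t where "t = Min (K1 \<union> K2)"
  have tin: "t \<in> K1 \<union> K2" unfolding t_def using Min_in[OF fin ne] .
  have tle: "\<And>k. k \<in> K1 \<union> K2 \<Longrightarrow> t \<le> k" unfolding t_def using Min_le[OF fin] by blast
  have kpos: "0 < k" if "k \<in> K1 \<union> K2" for k
  proof -
    { assume "k \<in> K1"
      then obtain e where "e \<in> E" "y e < 0" "k = x e / (- y e)" unfolding K1_def by blast
      then have ?thesis using pos divide_pos_neg[of "x e" "y e"] by force }
    moreover
    { assume "k \<in> K2"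
      then obtain S where S: "S \<subseteq> V" "odd (card S)" "sum y (cut E en S) < 0"
        "k = (sum x (cut E en S) - 1) / (- sum y (cut E en S))" unfolding K2_def by blast
      then have "1 < sum x (cut E en S)" using nt Y by blast
      then have ?thesis using S divide_pos_neg[of "sum x (cut E en S) - 1" "sum y (cut E en S)"] by force }
    ultimately show ?thesis using that by blast
  qed
  have tpos: "0 < t" using kpos tin by blast
  have sumd: "sum (\<lambda>e. x e + t * y e) A = sum x A + t * sum y A" for A
    by (simp add: sum.distrib sum_distrib_left)
  have P': "inP V E en (\<lambda>e. x e + t * y e)" unfolding inP_def
  proof (intro conjI ballI allI impI)
    fix e assume e: "e \<in> E"
    show "0 \<le> x e + t * y e"
    proof (cases "y e < 0")
      case True
      then have "t \<le> x e / (- y e)" using tle e unfolding K1_def by blast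
      moreover have ny: "0 < - y e" using True by simp
      ultimately have "t * (- y e) \<le> x e" using pos_le_divide_eq[OF ny] by blast
      then show ?thesis by simp
    next
      case False
      then have "0 \<le> t * y e" using tpos by simp
      then show ?thesis using pos e by (simp add: add_nonneg_nonneg less_imp_le)
    qed
  next
    fix v assume "v \<in> V" then show "sum (\<lambda>e. x e + t * y e) (inc E en v) = 1"
      using P ker unfolding sumd inP_def by simp
  next
    fix S assume S: "S \<subseteq> V" "odd (card S)"
    have x1: "1 \<le> sum x (cut E en S)" using P S unfolding inP_def by blast
    show "1 \<le> sum (\<lambda>e. x e + t * y e) (cut E en S)"
    proof (cases "sum y (cut E en S) < 0")
      case True
      then have "t \<le> (sum x (cut E en S) - 1) / (- sum y (cut E en S))" using tle S unfolding K2_def by blast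
      moreover have ny: "0 < - sum y (cut E en S)" using True by simp
      ultimately have "t * (- sum y (cut E en S)) \<le> sum x (cut E en S) - 1" using pos_le_divide_eq[OF ny] by blast
      then show ?thesis unfolding sumd by simp
    next
      case False then show ?thesis unfolding sumd using x1 tpos by (simp add: add_increasing2)
    qed
  qed
  have tight: "(\<exists>e\<in>E. x e + t * y e = 0) \<or> (\<exists>S. nontriv V S \<and> sum (\<lambda>e. x e + t * y e) (cut E en S) = 1)"
  proof (cases "t \<in> K1")
    case True
    then obtain e where "e \<in> E" "y e < 0" "t = x e / (- y e)" unfolding K1_def by blast
    then have "x e + t * y e = 0" by simp
    then show ?thesis using \<open>e \<in> E\<close> by blast
  next
    case False
    then have "t \<in> K2" using tin by blast
    then obtain S where S: "S \<subseteq> V" "odd (card S)" "sum y (cut E en S) < 0"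
      "t = (sum x (cut E en S) - 1) / (- sum y (cut E en S))" unfolding K2_def by blast
    then have "sum (\<lambda>e. x e + t * y e) (cut E en S) = 1" unfolding sumd by simp
    then show ?thesis using Y[OF S(1-3)] by blast
  qed
  show ?thesis using tpos P' tight by blast
qed


lemma inP_even: assumes mg: "mg V E en" and P: "inP V E en x" shows "even (card V)"
proof (rule ccontr)
  assume "odd (card V)"
  then have "1 \<le> sum x (cut E en V)" using P unfolding inP_def by blast
  then show False using cut_V[OF mg] by simp
qed

lemma sum_delta_fun:
  fixes x :: "'e \<Rightarrow> real"
  assumes fX: "finite X" and fC: "finite C" and h: "\<And>f. f \<in> C \<Longrightarrow> h f \<in> X"
  shows "(\<Sum>M\<in>{M\<in>X. P M}. \<Sum>f\<in>C. if M = h f then x f else 0) = sum x {f\<in>C. P (h f)}"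
proof -
  have "(\<Sum>M\<in>{M\<in>X. P M}. \<Sum>f\<in>C. if M = h f then x f else 0) = (\<Sum>f\<in>C. \<Sum>M\<in>{M\<in>X. P M}. if M = h f then x f else 0)"
    by (rule sum.swap)
  also have "\<dots> = (\<Sum>f\<in>C. if P (h f) then x f else 0)"
  proof (rule sum.cong[OF refl])
    fix f assume f: "f \<in> C"
    have "(\<Sum>M\<in>{M\<in>X. P M}. if M = h f then x f else 0) = (\<Sum>M\<in>{M\<in>X. P M}. if h f = M then x f else 0)"
      by (rule sum.cong) auto
    also have "\<dots> = (if h f \<in> {M\<in>X. P M} then x f else 0)" using fX by (simp add: sum.delta)
    finally show "(\<Sum>M\<in>{M\<in>X. P M}. if M = h f then x f else 0) = (if P (h f) then x f else 0)" using h f by simp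
  qed
  also have "\<dots> = sum x {f\<in>C. P (h f)}" by (rule sum.inter_filter[OF fC, symmetric])
  finally show ?thesis .
qed

lemma deg2:
  assumes mg: "mg V E en" and P: "inP V E en x" and pos: "\<forall>e\<in>E. 0 < x e"
    and v: "v \<in> V" and iv: "inc E en v = {e1, e2}" and ne: "e1 \<noteq> e2"
    and en1: "en e1 = {v, u}" and en2: "en e2 = {v, w}" and uw: "u \<noteq> w"
  shows "\<exists>S r1 r2. S \<subseteq> V \<and> r1 \<in> V - S \<and> r2 \<in> S \<and> card S = 3 \<and> sum x (cut E en S) = 1 \<and>
     decomp (insert r1 S) (ctrE E en (kf S r1)) (ctren en (kf S r1)) x"
proof -
  have fV: "finite V" and fE: "finite E" using mg mg_finite by blast+
  have e12: "e1 \<in> E" "e2 \<in> E" using iv by (auto simp: inc_def)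
  have uv: "u \<noteq> v"
  proof
    assume "u = v" then have "card (en e1) = 1" using en1 by simp
    then show False using mg_en(2)[OF mg e12(1)] by simp
  qed
  have wv: "w \<noteq> v"
  proof
    assume "w = v" then have "card (en e2) = 1" using en2 by simp
    then show False using mg_en(2)[OF mg e12(2)] by simp
  qed
  have uV: "u \<in> V" "w \<in> V" using mg_en(1)[OF mg e12(1)] mg_en(1)[OF mg e12(2)] en1 en2 by auto
  define S where "S = {u, v, w}"
  have SV: "S \<subseteq> V" using uV v S_def by auto
  have cS: "card S = 3" using uv wv uw S_def by auto
  define C where "C = cut E en S"
  define Uw where "Uw = {e\<in>E. en e = {u, w}}"
  have inside: "{e\<in>E. en e \<subseteq> S} = {e1, e2} \<union> Uw"
  proof (intro equalityI subsetI)
    fix e assume e: "e \<in> {e\<in>E. en e \<subseteq> S}"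
    show "e \<in> {e1, e2} \<union> Uw"
    proof (cases "v \<in> en e")
      case True then have "e \<in> inc E en v" using e by (simp add: inc_def)
      then show ?thesis using iv by auto
    next
      case False
      then have "en e \<subseteq> {u, w}" using e S_def by auto
      moreover have "card (en e) = 2" using mg_en(2)[OF mg] e by auto
      ultimately have "en e = {u, w}"
        by (intro card_seteq) (use uw in auto)
      then show ?thesis using e Uw_def by auto
    qed
  qed (use e12 en1 en2 S_def Uw_def in auto)
  have Uwv: "e \<notin> Uw" if "e \<in> {e1,e2}" for e using that en1 en2 uv wv unfolding Uw_def by (auto simp: doubleton_eq_iff)
  have fUw: "finite Uw" using fE Uw_def by auto
  have hs: "(\<Sum>z\<in>S. sum x (inc E en z)) = sum x C + 2 * sum x {e\<in>E. en e \<subseteq> S}"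
    unfolding C_def by (rule handshake[OF mg SV])
  have "(\<Sum>z\<in>S. sum x (inc E en z)) = (\<Sum>z\<in>S. 1)"
    by (rule sum.cong) (use P SV in \<open>auto simp: inP_def\<close>)
  then have "(\<Sum>z\<in>S. sum x (inc E en z)) = 3" using cS by simp
  moreover have "sum x {e\<in>E. en e \<subseteq> S} = x e1 + x e2 + sum x Uw"
    unfolding inside using ne Uwv fUw by (simp add: sum.union_disjoint)
  moreover have "x e1 + x e2 = 1" using P v iv ne unfolding inP_def by auto
  ultimately have xC: "sum x C = 1 - 2 * sum x Uw" using hs by simp
  have "1 \<le> sum x C" using P SV cS unfolding inP_def C_def by auto
  then have "sum x Uw \<le> 0" using xC by simp
  have Uw0: "Uw = {}"
  proof (rule ccontr)
    assume "Uw \<noteq> {}"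
    then have "0 < sum x Uw" using sum_pos[OF fUw] pos unfolding Uw_def by auto
    then show False using \<open>sum x Uw \<le> 0\<close> by simp
  qed
  have xC1: "sum x C = 1" using xC Uw0 by simp
  have evenV: "even (card V)" by (rule inP_even[OF mg P])
  have "V - S \<noteq> {}"
  proof
    assume "V - S = {}" then have "V = S" using SV by blast
    then show False using evenV cS by simp
  qed
  then obtain r1 where r1: "r1 \<in> V - S" by blast
  have Cprop: "f \<in> E \<and> ((u \<in> en f \<and> v \<notin> en f \<and> w \<notin> en f) \<or> (w \<in> en f \<and> v \<notin> en f \<and> u \<notin> en f))" if f: "f \<in> C" for f
  proof -
    have fE': "f \<in> E" using f unfolding C_def cut_def by auto
    have vf: "v \<notin> en f"
    proof
      assume "v \<in> en f" then have "f \<in> {e1,e2}" using iv fE' by (auto simp: inc_def)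
      then show False using f en1 en2 unfolding C_def cut_def S_def by auto
    qed
    have "card (en f \<inter> S) = 1" using card_en_Int[OF mg fE', of S] f C_def by simp
    then obtain z where z: "en f \<inter> S = {z}" by (meson card_1_singletonE)
    then have zS: "z \<in> S" "z \<in> en f" by auto
    then have "z = u \<or> z = w" using vf S_def by auto
    then show ?thesis
    proof
      assume zu: "z = u"
      have "w \<notin> en f"
      proof
        assume "w \<in> en f" then have "w \<in> en f \<inter> S" using S_def by auto
        then show False using z zu uw by auto
      qed
      then show ?thesis using zu zS vf fE' by blast
    next
      assume zw: "z = w"
      have "u \<notin> en f"
      proof
        assume "u \<in> en f" then have "u \<in> en f \<inter> S" using S_def by auto
        then show False using z zw uw by auto
      qed
      then show ?thesis using zw zS vf fE' by blast
    qed
  qed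
  define g where "g f = (if u \<in> en f then e2 else e1)" for f
  define h where "h f = {f, g f}" for f
  define E1 where "E1 = ctrE E en (kf S r1)"
  have E1: "E1 = {e\<in>E. en e \<inter> S \<noteq> {}}" unfolding E1_def using kf_facts(1)[OF mg SV r1] .
  have CE1: "C \<subseteq> E1" unfolding E1 C_def cut_def by auto
  have e12E1: "e1 \<in> E1" "e2 \<in> E1" using e12 en1 en2 S_def E1 by auto
  have e12C: "e1 \<notin> C" "e2 \<notin> C" using en1 en2 unfolding S_def C_def cut_def by auto
  have hE1: "h f \<in> Pow E1" if "f \<in> C" for f using that CE1 e12E1 h_def g_def by auto
  have fE1: "finite E1" using fE E1 by auto
  have fC: "finite C" using fE unfolding C_def cut_def by auto
  define c where "c M = (\<Sum>f\<in>C. if M = h f then x f else 0)" for M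
  have Sdelta: "sum c {M\<in>Pow E1. Q M} = sum x {f\<in>C. Q (h f)}" for Q
    unfolding c_def by (rule sum_delta_fun[OF _ fC hE1]) (use fE1 in auto)
  have incu: "inc E en u = {e1} \<union> {f\<in>C. u \<in> en f}"
  proof (intro equalityI subsetI)
    fix e assume e: "e \<in> inc E en u"
    show "e \<in> {e1} \<union> {f\<in>C. u \<in> en f}"
    proof (cases "e \<in> C")
      case True then show ?thesis using e by (auto simp: inc_def)
    next
      case False
      then have "en e \<subseteq> S" using e unfolding C_def cut_def S_def inc_def by auto
      then have "e \<in> {e1,e2}" using inside Uw0 e by (auto simp: inc_def)
      then show ?thesis using e en2 uv uw by (auto simp: inc_def)
    qed
  qed (use e12 en1 in \<open>auto simp: inc_def C_def cut_def\<close>)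
  have incw: "inc E en w = {e2} \<union> {f\<in>C. w \<in> en f}"
  proof (intro equalityI subsetI)
    fix e assume e: "e \<in> inc E en w"
    show "e \<in> {e2} \<union> {f\<in>C. w \<in> en f}"
    proof (cases "e \<in> C")
      case True then show ?thesis using e by (auto simp: inc_def)
    next
      case False
      then have "en e \<subseteq> S" using e unfolding C_def cut_def S_def inc_def by auto
      then have "e \<in> {e1,e2}" using inside Uw0 e by (auto simp: inc_def)
      then show ?thesis using e en1 wv uw by (auto simp: inc_def)
    qed
  qed (use e12 en2 in \<open>auto simp: inc_def C_def cut_def\<close>)
  have xu: "sum x {f\<in>C. u \<in> en f} = x e2"
  proof -
    have "sum x (inc E en u) = x e1 + sum x {f\<in>C. u \<in> en f}"
      unfolding incu using e12C fC by (subst sum.union_disjoint) auto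
    moreover have "sum x (inc E en u) = 1" using P uV unfolding inP_def by auto
    moreover have "x e1 + x e2 = 1" using P v iv ne unfolding inP_def by auto
    ultimately show ?thesis by simp
  qed
  have xw: "sum x {f\<in>C. w \<in> en f} = x e1"
  proof -
    have "sum x (inc E en w) = x e2 + sum x {f\<in>C. w \<in> en f}"
      unfolding incw using e12C fC by (subst sum.union_disjoint) auto
    moreover have "sum x (inc E en w) = 1" using P uV unfolding inP_def by auto
    moreover have "x e1 + x e2 = 1" using P v iv ne unfolding inP_def by auto
    ultimately show ?thesis by simp
  qed
  have D1: "decomp (insert r1 S) E1 (ctren en (kf S r1)) x" unfolding decomp_def
  proof (intro exI[of _ c] conjI allI impI ballI)
    fix M show "0 \<le> c M" unfolding c_def
    proof (rule sum_nonneg)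
      fix f assume "f \<in> C" then have "f \<in> E" using CE1 E1 by auto
      then have "0 < x f" using pos by blast
      then show "0 \<le> (if M = h f then x f else 0)" by simp
    qed
  next
    fix M assume "c M \<noteq> 0"
    then obtain f where f0: "f \<in> C" "(if M = h f then x f else 0) \<noteq> 0"
      unfolding c_def using sum.not_neutral_contains_not_neutral by blast
    then have f: "f \<in> C" "M = h f" by (auto split: if_splits)
    have ME: "M \<subseteq> E1" using hE1 f by auto
    have ME': "M \<subseteq> E" using ME E1 by auto
    have fnot: "f \<noteq> e1" "f \<noteq> e2" using f e12C by auto
    show "pm (insert r1 S) E1 (ctren en (kf S r1)) M" unfolding pm_def
    proof (intro conjI ballI ME)
      fix z assume z: "z \<in> insert r1 S"
      show "card (inc M (ctren en (kf S r1)) z) = 1"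
      proof (cases "z = r1")
        case True
        have "inc M (ctren en (kf S r1)) r1 = M \<inter> cut E en S"
          using kf_facts(3)[OF mg SV r1] ME unfolding E1_def by blast
        also have "\<dots> = {f}" using f e12C C_def by (auto simp: h_def g_def)
        finally show ?thesis using True by simp
      next
        case False
        then have zS: "z \<in> S" using z by blast
        have "inc M (ctren en (kf S r1)) z = inc M en z" using kf_facts(2)[OF mg SV r1 zS ME'] .
        also have "\<dots> = (if z \<in> en f then {f} else {g f})"
        proof -
          have gf: "z \<in> en (g f) \<longleftrightarrow> z \<notin> en f"
          proof (cases "u \<in> en f")
            case True
            then have "v \<notin> en f" "w \<notin> en f" using Cprop[OF f(1)] by auto
            then show ?thesis using True zS en2 uv uw S_def by (auto simp: g_def)
          next
            case False
            then have "v \<notin> en f" "w \<in> en f" using Cprop[OF f(1)] by auto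
            then show ?thesis using False zS en1 wv uw S_def by (auto simp: g_def)
          qed
          have "inc M en z = {e\<in>{f, g f}. z \<in> en e}" using f(2) by (simp add: inc_def h_def)
          then show ?thesis using gf by auto
        qed
        finally show ?thesis by simp
      qed
    qed
  next
    show "sum c (Pow E1) = 1" using Sdelta[of "\<lambda>_. True"] xC1 by (simp add: Pow_def)
  next
    fix e assume e: "e \<in> E1"
    have "sum c {M\<in>Pow E1. e \<in> M} = sum x {f\<in>C. e \<in> h f}" by (rule Sdelta)
    also have "\<dots> = x e"
    proof -
      consider "e \<in> C" | "e = e1" | "e = e2" using e inside Uw0 unfolding E1 C_def cut_def by blast
      then show ?thesis
      proof cases
        case 1
        then have "{f\<in>C. e \<in> h f} = {e}" using e12C by (auto simp: h_def g_def)
        then show ?thesis by simp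
      next
        case 2
        have "e \<in> h f \<longleftrightarrow> w \<in> en f" if "f \<in> C" for f
          using 2 e12C Cprop[OF that] ne that by (auto simp: h_def g_def)
        then have "{f\<in>C. e \<in> h f} = {f\<in>C. w \<in> en f}" by blast
        then show ?thesis using xw 2 by simp
      next
        case 3
        have "e \<in> h f \<longleftrightarrow> u \<in> en f" if "f \<in> C" for f
          using 3 e12C Cprop[OF that] ne that by (auto simp: h_def g_def)
        then have "{f\<in>C. e \<in> h f} = {f\<in>C. u \<in> en f}" by blast
        then show ?thesis using xu 3 by simp
      qed
    qed
    finally show "sum c {M\<in>Pow E1. e \<in> M} = x e" .
  qed
  show ?thesis using SV r1 cS xC1 D1 S_def C_def E1_def by (intro exI[of _ S] exI[of _ r1] exI[of _ v]) auto
qed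


lemma reduce:
  fixes V :: "'v set" and E :: "'e set" and en :: "'e \<Rightarrow> 'v set" and x :: "'e \<Rightarrow> real"
  assumes IH: "\<And>V' E' (en' :: 'e \<Rightarrow> 'v set) x'. card V' + card E' < card V + card E \<Longrightarrow> mg V' E' en' \<Longrightarrow> inP V' E' en' x' \<Longrightarrow> decomp V' E' en' x'"
    and mg: "mg V E en" and P: "inP V E en x"
    and red: "(\<exists>e\<in>E. x e = 0) \<or> (\<exists>S. nontriv V S \<and> sum x (cut E en S) = 1)"
  shows "decomp V E en x"
proof -
  have fV: "finite V" and fE: "finite E" using mg mg_finite by blast+
  show ?thesis
  proof (cases "\<exists>e\<in>E. x e = 0")
    case True
    then obtain e0 where e0: "e0 \<in> E" "x e0 = 0" by blast
    have "card (E - {e0}) < card E" using e0 fE by (meson card_Diff1_less)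
    then have "card V + card (E - {e0}) < card V + card E" by simp
    then have "decomp V (E - {e0}) en x"
      by (rule IH[OF _ del_edge(1)[OF mg P e0] del_edge(2)[OF mg P e0]])
    then show ?thesis using del_edge(3)[OF mg P e0] by blast
  next
    case False
    have "\<forall>e\<in>E. 0 \<le> x e" using P unfolding inP_def by blast
    then have pos: "\<forall>e\<in>E. 0 < x e" using False by force
    from False red obtain S where S: "nontriv V S" "sum x (cut E en S) = 1" by blast
    have SV: "S \<subseteq> V" and oS: "odd (card S)" and c2: "2 \<le> card S" "2 \<le> card (V - S)"
      using S(1) unfolding nontriv_def by auto
    have cV: "card V = card S + card (V - S)" using SV fV
      by (metis card_Diff_subset card_mono diff_add_inverse finite_subset le_add_diff_inverse)
    have evenV: "even (card V)" by (rule inP_even[OF mg P])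
    have oVS: "odd (card (V - S))" using cV evenV oS by simp
    have "V - S \<noteq> {}" proof assume h: "V - S = {}" show False using c2(2) unfolding h by simp qed
    then obtain r1 where r1: "r1 \<in> V - S" by blast
    have "S \<noteq> {}" proof assume h: "S = {}" show False using c2(1) unfolding h by simp qed
    then obtain r2 where r2: "r2 \<in> S" by blast
    have fS: "finite S" using SV fV finite_subset by blast
    note G1 = inP_kf[OF mg P SV r1 oVS S(2)]
    have S2: "V - S \<subseteq> V" "r2 \<in> V - (V - S)" using r2 SV by auto
    have VVS: "V - (V - S) = S" using SV by blast
    have tight2: "sum x (cut E en (V - S)) = 1" using cut_compl[OF mg SV] S(2) by simp
    note G2 = inP_kf[OF mg P S2(1) S2(2), unfolded VVS, OF oS tight2]
    have cE1: "card (ctrE E en (kf S r1)) \<le> card E" by (rule card_mono[OF fE]) (auto simp: ctrE_def)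
    have cE2: "card (ctrE E en (kf (V - S) r2)) \<le> card E" by (rule card_mono[OF fE]) (auto simp: ctrE_def)
    have cV1: "card (insert r1 S) < card V" using r1 fS c2 cV by (simp add: card_insert_if)
    have cV2: "card (insert r2 (V - S)) < card V" using r2 fV c2 cV by (simp add: card_insert_if)
    have D1: "decomp (insert r1 S) (ctrE E en (kf S r1)) (ctren en (kf S r1)) x"
      using IH[OF _ G1] cE1 cV1 by linarith
    have D2: "decomp (insert r2 (V - S)) (ctrE E en (kf (V - S) r2)) (ctren en (kf (V - S) r2)) x"
      using IH[OF _ G2] cE2 cV2 by linarith
    show ?thesis by (rule glue[OF mg P pos SV r1 r2 S(2) D1 D2])
  qed
qed

lemma opposite_sign:
  fixes y :: "'e \<Rightarrow> real"
  assumes mg: "mg V E en" and ker: "\<forall>v\<in>V. sum y (inc E en v) = 0" and e: "e \<in> E" "y e \<noteq> 0"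
  shows "\<exists>e'\<in>E. y e' < 0"
proof (rule ccontr)
  assume no: "\<not> (\<exists>e'\<in>E. y e' < 0)"
  then have ye: "0 < y e" using e by force
  have "en e \<noteq> {}" using mg_en(2)[OF mg e(1)] by fastforce
  then obtain v where v: "v \<in> en e" by blast
  then have vV: "v \<in> V" using mg_en(1)[OF mg e(1)] by blast
  have fin: "finite (inc E en v)" using mg_finite(2)[OF mg] by (auto simp: inc_def)
  have "0 < sum y (inc E en v)"
    by (rule sum_pos2[OF fin, of e]) (use e v ye no in \<open>auto simp: inc_def not_less\<close>)
  then show False using ker vV by simp
qed


lemma edmonds_aux:
  fixes n :: nat
  shows "\<forall>(V::'v set) (E::'e set) en x. card V + card E = n \<longrightarrow> mg V E en \<longrightarrow> inP V E en x \<longrightarrow> decomp V E en x"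
proof (induction n rule: less_induct)
  case (less n)
  show ?case
  proof (intro allI impI)
    fix V :: "'v set" and E :: "'e set" and en :: "'e \<Rightarrow> 'v set" and x :: "'e \<Rightarrow> real"
    assume n: "card V + card E = n" and mg: "mg V E en" and P: "inP V E en x"
    have IH: "\<And>V' E' (en' :: 'e \<Rightarrow> 'v set) x'. card V' + card E' < card V + card E \<Longrightarrow> mg V' E' en' \<Longrightarrow> inP V' E' en' x' \<Longrightarrow> decomp V' E' en' x'"
      using less.IH n by blast
    have fV: "finite V" and fE: "finite E" using mg mg_finite by blast+
    have nonneg: "\<forall>e\<in>E. 0 \<le> x e" and vsum: "\<forall>v\<in>V. sum x (inc E en v) = 1"
      and oddc: "\<forall>S. S \<subseteq> V \<longrightarrow> odd (card S) \<longrightarrow> 1 \<le> sum x (cut E en S)"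
      using P unfolding inP_def by blast+
    show "decomp V E en x"
    proof (cases "(\<exists>e\<in>E. x e = 0) \<or> (\<exists>S. nontriv V S \<and> sum x (cut E en S) = 1)")
      case True show ?thesis by (rule reduce[OF IH mg P True])
    next
      case False
      have pos: "\<forall>e\<in>E. 0 < x e" using False nonneg by force
      have nt: "\<forall>S. nontriv V S \<longrightarrow> 1 < sum x (cut E en S)"
      proof (intro allI impI)
        fix S assume S: "nontriv V S"
        then have "1 \<le> sum x (cut E en S)" using oddc unfolding nontriv_def by blast
        moreover have "sum x (cut E en S) \<noteq> 1" using False S by blast
        ultimately show "1 < sum x (cut E en S)" by simp
      qed
      show ?thesis
      proof (cases "V = {}")
        case True then show ?thesis using decomp_empty mg by blast
      next
        case Vne: False
        show ?thesis
        proof (cases "\<exists>v\<in>V. card (inc E en v) = 1")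
          case True
          then obtain v where v: "v \<in> V" "card (inc E en v) = 1" by blast
          then obtain e0 where e0: "inc E en v = {e0}" by (meson card_1_singletonE)
          have e0E: "e0 \<in> E" "v \<in> en e0" using e0 by (auto simp: inc_def)
          obtain a b where ab: "en e0 = {a,b}" "a \<noteq> b" using mg_en(2)[OF mg e0E(1)] card2_obtain by metis
          obtain u where u: "en e0 = {v,u}" "v \<noteq> u" using ab e0E(2) by (metis insert_commute insertE singletonD)
          have uV: "u \<in> V" using mg_en(1)[OF mg e0E(1)] u by auto
          have xe0: "x e0 = 1" using vsum v e0 by auto
          have iu: "inc E en u = {e0}"
          proof (rule ccontr)
            assume "inc E en u \<noteq> {e0}"
            moreover have e0u: "e0 \<in> inc E en u" using e0E u by (auto simp: inc_def)
            ultimately obtain f where f: "f \<in> inc E en u" "f \<noteq> e0" by blast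
            have fin: "finite (inc E en u)" using fE by (auto simp: inc_def)
            have fE': "f \<in> E" using f by (auto simp: inc_def)
            have "sum x {e0, f} \<le> sum x (inc E en u)"
              by (rule sum_mono2[OF fin]) (use e0u f nonneg in \<open>auto simp: inc_def\<close>)
            moreover have "sum x {e0, f} = 1 + x f" using f xe0 by simp
            ultimately show False using vsum uV pos fE' by fastforce
          qed
          note DI = del_iso[OF mg P e0E(1) u(1) u(2) e0 iu]
          have "card (E - {e0}) < card E" using e0E fE by (meson card_Diff1_less)
          moreover have "card (V - {v,u}) \<le> card V" using fV by (simp add: card_mono)
          ultimately have "card (V - {v,u}) + card (E - {e0}) < card V + card E" by linarith
          then show ?thesis using IH[OF _ DI(1) DI(2)] DI(3) by blast
        next
          case deg1: False
          show ?thesis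
          proof (cases "\<exists>v\<in>V. \<exists>e1 e2. inc E en v = {e1,e2} \<and> e1 \<noteq> e2 \<and> en e1 \<noteq> en e2")
            case True
            then obtain v e1 e2 where v: "v \<in> V" "inc E en v = {e1,e2}" "e1 \<noteq> e2" "en e1 \<noteq> en e2" by blast
            have e12: "e1 \<in> E" "e2 \<in> E" "v \<in> en e1" "v \<in> en e2" using v by (auto simp: inc_def)
            obtain u where u: "en e1 = {v,u}"
            proof -
              obtain a b where ab: "en e1 = {a,b}" "a \<noteq> b" using mg_en(2)[OF mg e12(1)] card2_obtain by metis
              then show ?thesis using that e12(3) by (metis insert_commute insertE singletonD)
            qed
            obtain w where w: "en e2 = {v,w}"
            proof -
              obtain a b where ab: "en e2 = {a,b}" "a \<noteq> b" using mg_en(2)[OF mg e12(2)] card2_obtain by metis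
              then show ?thesis using that e12(4) by (metis insert_commute insertE singletonD)
            qed
            have uw: "u \<noteq> w" using u w v(4) by auto
            obtain S r1 r2 where S: "S \<subseteq> V" "r1 \<in> V - S" "r2 \<in> S" "card S = 3" "sum x (cut E en S) = 1"
              "decomp (insert r1 S) (ctrE E en (kf S r1)) (ctren en (kf S r1)) x"
              using deg2[OF mg P pos v(1) v(2) v(3) u w uw] by blast
            have S2: "V - S \<subseteq> V" "r2 \<in> V - (V - S)" using S by auto
            have VVS: "V - (V - S) = S" using S by blast
            have oS: "odd (card S)" using S by simp
            have tight2: "sum x (cut E en (V - S)) = 1" using cut_compl[OF mg S(1)] S(5) by simp
            note G2 = inP_kf[OF mg P S2(1) S2(2), unfolded VVS, OF oS tight2]
            have cE2: "card (ctrE E en (kf (V - S) r2)) \<le> card E" by (rule card_mono[OF fE]) (auto simp: ctrE_def)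
            have fS: "finite S" using S(1) fV finite_subset by blast
            have cV: "card V = card S + card (V - S)" using S(1) fV
              by (metis card_Diff_subset card_mono diff_add_inverse finite_subset le_add_diff_inverse)
            have cV2: "card (insert r2 (V - S)) < card V" using S(3,4) fV cV by (simp add: card_insert_if)
            have D2: "decomp (insert r2 (V - S)) (ctrE E en (kf (V - S) r2)) (ctren en (kf (V - S) r2)) x"
              using IH[OF _ G2] cE2 cV2 by linarith
            show ?thesis by (rule glue[OF mg P pos S(1) S(2) S(3) S(5) S(6) D2])
          next
            case deg2: False
            obtain y :: "'e \<Rightarrow> real" where y0: "\<exists>e\<in>E. y e \<noteq> 0" and ker: "\<forall>v\<in>V. sum y (inc E en v) = 0"
            proof (cases "\<exists>e1\<in>E. \<exists>e2\<in>E. e1 \<noteq> e2 \<and> en e1 = en e2")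
              case True
              then obtain e1 e2 where e: "e1 \<in> E" "e2 \<in> E" "e1 \<noteq> e2" "en e1 = en e2" by blast
              define y :: "'e \<Rightarrow> real" where "y e = (if e = e1 then 1 else if e = e2 then -1 else 0)" for e
              have "sum y (inc E en v) = 0" if "v \<in> V" for v
              proof -
                have fi: "finite (inc E en v)" using fE by (auto simp: inc_def)
                have "sum y (inc E en v) = sum y (inc E en v \<inter> {e1,e2})"
                  by (rule sum.mono_neutral_right[OF fi]) (auto simp: y_def)
                also have "\<dots> = (if v \<in> en e1 then y e1 + y e2 else 0)"
                proof (cases "v \<in> en e1")
                  case True then have "inc E en v \<inter> {e1,e2} = {e1,e2}" using e by (auto simp: inc_def)
                  then show ?thesis using True e by simp
                next
                  case False then have "inc E en v \<inter> {e1,e2} = {}" using e by (auto simp: inc_def)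
                  then show ?thesis using False by simp
                qed
                finally show ?thesis using e by (simp add: y_def)
              qed
              moreover have "\<exists>e\<in>E. y e \<noteq> 0" using e by (auto simp: y_def)
              ultimately show ?thesis using that[of y] by blast
            next
              case False
              have deg3: "3 \<le> card (inc E en v)" if v: "v \<in> V" for v
              proof -
                have fi: "finite (inc E en v)" using fE by (auto simp: inc_def)
                have "card (inc E en v) \<noteq> 0"
                proof
                  assume "card (inc E en v) = 0" then have "inc E en v = {}" using fi by simp
                  then show False using vsum v by force
                qed
                moreover have "card (inc E en v) \<noteq> 1" using deg1 v by blast
                moreover have "card (inc E en v) \<noteq> 2"
                proof
                  assume "card (inc E en v) = 2"
                  then obtain e1 e2 where ee: "inc E en v = {e1,e2}" "e1 \<noteq> e2" using card2_obtain by metis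
                  then have "e1 \<in> E" "e2 \<in> E" by (auto simp: inc_def)
                  then have "en e1 \<noteq> en e2" using False ee by blast
                  then show False using deg2 v ee by blast
                qed
                ultimately show ?thesis by linarith
              qed
              have hs: "(\<Sum>z\<in>V. sum (\<lambda>_. 1::real) (inc E en z)) = sum (\<lambda>_. 1::real) (cut E en V) + 2 * sum (\<lambda>_. 1::real) {e\<in>E. en e \<subseteq> V}"
                by (rule handshake[OF mg subset_refl])
              have "{e\<in>E. en e \<subseteq> V} = E" using mg_en(1)[OF mg] by blast
              then have "(\<Sum>z\<in>V. real (card (inc E en z))) = 2 * real (card E)" using hs cut_V[OF mg] by simp
              moreover have "(\<Sum>z\<in>V. real (card (inc E en z))) \<ge> (\<Sum>z\<in>V. 3)"
                by (rule sum_mono) (use deg3 in auto)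
              ultimately have "3 * real (card V) \<le> 2 * real (card E)" by simp
              moreover have "0 < card V" using Vne fV by (simp add: card_gt_0_iff)
              ultimately have cVE: "card V < card E" by linarith
              obtain y :: "'e \<Rightarrow> real" where y: "\<exists>e\<in>E. y e \<noteq> 0"
                "\<forall>v\<in>V. (\<Sum>e\<in>E. (if v \<in> en e then 1 else 0) * y e) = 0"
                using kernel_exists[OF fV fE cVE, of "\<lambda>v e. if v \<in> en e then 1 else 0"] by blast
              have "sum y (inc E en v) = 0" if "v \<in> V" for v
              proof -
                have "sum y (inc E en v) = (\<Sum>e\<in>E. if v \<in> en e then y e else 0)"
                  unfolding inc_def by (rule sum.inter_filter[OF fE])
                also have "\<dots> = (\<Sum>e\<in>E. (if v \<in> en e then 1 else 0) * y e)" by (rule sum.cong) auto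
                finally show ?thesis using y(2) that by simp
              qed
              then show ?thesis using that[of y] y(1) by blast
            qed
            obtain e where e: "e \<in> E" "y e \<noteq> 0" using y0 by blast
            obtain e0 where e0: "e0 \<in> E" "y e0 < 0" using opposite_sign[OF mg ker e] by blast
            have ker': "\<forall>v\<in>V. sum (\<lambda>e. - y e) (inc E en v) = 0" using ker by (simp add: sum_negf)
            obtain e0' where e0': "e0' \<in> E" "- y e0' < 0"
              using opposite_sign[OF mg ker', of e] e by auto
            obtain t2 where t2: "0 < t2" "inP V E en (\<lambda>e. x e + t2 * y e)"
              "(\<exists>e\<in>E. x e + t2 * y e = 0) \<or> (\<exists>S. nontriv V S \<and> sum (\<lambda>e. x e + t2 * y e) (cut E en S) = 1)"
              using perturb[OF mg P pos nt ker e0] by blast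
            obtain t1 where t1: "0 < t1" "inP V E en (\<lambda>e. x e + t1 * - y e)"
              "(\<exists>e\<in>E. x e + t1 * - y e = 0) \<or> (\<exists>S. nontriv V S \<and> sum (\<lambda>e. x e + t1 * - y e) (cut E en S) = 1)"
              using perturb[OF mg P pos nt ker' e0'] by blast
            have D2: "decomp V E en (\<lambda>e. x e + t2 * y e)" by (rule reduce[OF IH mg t2(2) t2(3)])
            have D1: "decomp V E en (\<lambda>e. x e + t1 * - y e)" by (rule reduce[OF IH mg t1(2) t1(3)])
            define l where "l = t1 / (t1 + t2)"
            have l: "0 \<le> l" "l \<le> 1" using t1(1) t2(1) by (auto simp: l_def)
            have "\<forall>e\<in>E. x e = l * (x e + t2 * y e) + (1 - l) * (x e + t1 * - y e)"
            proof
              fix e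
              have s: "0 < t1 + t2" using t1(1) t2(1) by simp
              have h1: "1 - l = t2 / (t1 + t2)" using s by (simp add: l_def field_simps)
              have "l * (x e + t2 * y e) + (1 - l) * (x e + t1 * - y e) = (t1 * (x e + t2 * y e) + t2 * (x e - t1 * y e)) / (t1 + t2)"
                by (simp only: h1) (simp add: l_def add_divide_distrib)
              also have "t1 * (x e + t2 * y e) + t2 * (x e - t1 * y e) = x e * (t1 + t2)" by (simp add: algebra_simps)
              finally show "x e = l * (x e + t2 * y e) + (1 - l) * (x e + t1 * - y e)" using s by simp
            qed
            then show ?thesis by (rule decomp_convex[OF D2 D1 l])
          qed
        qed
      qed
    qed
  qed
qed

theorem edmonds: "mg V E en \<Longrightarrow> inP V E en x \<Longrightarrow> decomp V E en x"
  using edmonds_aux by blast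


lemma cubic_mg: assumes "cubic_graph V E" shows "mg V E (\<lambda>e. e)"
proof -
  have sg: "finite V" "\<forall>e\<in>E. e \<subseteq> V \<and> card e = 2" using assms unfolding cubic_graph_def simple_graph_def by auto
  have "E \<subseteq> Pow V" using sg by auto
  then have "finite E" using sg(1) finite_subset by blast
  then show ?thesis using sg unfolding mg_def by auto
qed

lemma cubic_deg: assumes "cubic_graph V E" "v \<in> V" shows "card (inc E (\<lambda>e. e) v) = 3"
  using assms unfolding cubic_graph_def degree_def inc_def by auto

lemma cut_not_one:
  assumes mg: "mg V E (\<lambda>e. e)" and br: "bridgeless E" and S: "cut E (\<lambda>e. e) S = {e}"
  shows False
proof -
  have eE: "e \<in> E" and eS: "e \<inter> S \<noteq> {}" "\<not> e \<subseteq> S" using S unfolding cut_def by auto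
  obtain a b where ab: "a \<in> e" "a \<in> S" "b \<in> e" "b \<notin> S" using eS by blast
  have nb: "\<not> is_bridge E e" using br eE unfolding bridgeless_def by blast
  have c2: "card e = 2" using mg_en(2)[OF mg eE] by simp
  have fe: "finite e" using c2 card.infinite by fastforce
  have "{a, b} = e"
  proof (rule card_seteq[OF fe])
    show "{a, b} \<subseteq> e" using ab by auto
    have "a \<noteq> b" using ab by auto
    then show "card e \<le> card {a, b}" using c2 by simp
  qed
  then have eab: "e = {a, b}" "a \<noteq> b" using ab by auto
  then have conn: "(adj_edges (E - {e}))\<^sup>*\<^sup>* a b" using nb eE unfolding is_bridge_def by blast
  have "z \<in> S" if "(adj_edges (E - {e}))\<^sup>*\<^sup>* a z" for z
    using that
  proof (induction rule: rtranclp_induct)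
    case base then show ?case using ab by simp
  next
    case (step y z)
    have yz: "y \<noteq> z" "{y, z} \<in> E" "{y, z} \<noteq> e" using step(2) unfolding adj_edges_def by auto
    show ?case
    proof (rule ccontr)
      assume "z \<notin> S"
      then have "{y, z} \<in> cut E (\<lambda>e. e) S" using yz step(3) unfolding cut_def by auto
      then show False using S yz(3) by simp
    qed
  qed
  then show False using conn ab by blast
qed

lemma cubic_inP:
  assumes cub: "cubic_graph V E" and br: "bridgeless E"
  shows "inP V E (\<lambda>e. e) (\<lambda>_. 1/3)"
proof -
  have mg: "mg V E (\<lambda>e. e)" by (rule cubic_mg[OF cub])
  have fE: "finite E" using mg mg_finite by blast
  show ?thesis unfolding inP_def
  proof (intro conjI ballI allI impI)
    fix v assume "v \<in> V"
    then show "sum (\<lambda>_. 1 / 3) (inc E (\<lambda>e. e) v) = (1::real)" using cubic_deg[OF cub] by simp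
  next
    fix S assume S: "S \<subseteq> V" "odd (card S)"
    have hs: "(\<Sum>z\<in>S. sum (\<lambda>_. 1::real) (inc E (\<lambda>e. e) z)) = sum (\<lambda>_. 1::real) (cut E (\<lambda>e. e) S) + 2 * sum (\<lambda>_. 1::real) {e\<in>E. e \<subseteq> S}"
      by (rule handshake[OF mg S(1)])
    have "(\<Sum>z\<in>S. sum (\<lambda>_. 1::real) (inc E (\<lambda>e. e) z)) = (\<Sum>z\<in>S. 3)"
      by (rule sum.cong) (use S cubic_deg[OF cub] in auto)
    then have "real (3 * card S) = real (card (cut E (\<lambda>e. e) S) + 2 * card {e\<in>E. e \<subseteq> S})" using hs by simp
    then have "3 * card S = card (cut E (\<lambda>e. e) S) + 2 * card {e\<in>E. e \<subseteq> S}" by linarith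
    then have oc: "odd (card (cut E (\<lambda>e. e) S))" using S(2) by presburger
    have fc: "finite (cut E (\<lambda>e. e) S)" using fE by (auto simp: cut_def)
    have "card (cut E (\<lambda>e. e) S) \<noteq> 1"
    proof
      assume "card (cut E (\<lambda>e. e) S) = 1"
      then obtain e where "cut E (\<lambda>e. e) S = {e}" by (meson card_1_singletonE)
      then show False using cut_not_one[OF mg br] by blast
    qed
    then have "3 \<le> card (cut E (\<lambda>e. e) S)" using oc by presburger
    then have "3 \<le> real (card (cut E (\<lambda>e. e) S))" by simp
    then show "1 \<le> sum (\<lambda>_. 1 / (3::real)) (cut E (\<lambda>e. e) S)" by simp
  qed simp
qed

lemma pm_indep:
  assumes mg: "mg V E (\<lambda>e. e)" and pm: "pm V E (\<lambda>e. e) M"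
  shows "independent_set E line_adj M"
  unfolding independent_set_def
proof (intro conjI ballI)
  show "M \<subseteq> E" using pm by (simp add: pm_def)
  fix a b assume ab: "a \<in> M" "b \<in> M"
  show "\<not> line_adj a b"
  proof
    assume "line_adj a b"
    then obtain v where v: "v \<in> a" "v \<in> b" "a \<noteq> b" unfolding line_adj_def by blast
    have vV: "v \<in> V" using mg_en(1)[OF mg] ab v pm by (auto simp: pm_def)
    have "M \<subseteq> E" using pm by (simp add: pm_def)
    then have "finite M" using mg_finite(2)[OF mg] finite_subset by blast
    then have fi: "finite (inc M (\<lambda>e. e) v)" by (auto simp: inc_def)
    have "{a, b} \<subseteq> inc M (\<lambda>e. e) v" using ab v by (auto simp: inc_def)
    then have "card {a, b} \<le> card (inc M (\<lambda>e. e) v)" using fi by (rule card_mono[rotated])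
    then show False using pm vV v(3) by (simp add: pm_def)
  qed
qed

definition a3 :: "'a set set \<Rightarrow> 'a set \<Rightarrow> real" where
  "a3 E = (\<lambda>i. if i \<in> E then 1/3 else 0)"

lemma a3_VP:
  assumes cub: "cubic_graph V E" and br: "bridgeless E"
  shows "a3 E \<in> VP E line_adj"
proof -
  have mg: "mg V E (\<lambda>e. e)" by (rule cubic_mg[OF cub])
  have fE: "finite E" using mg mg_finite by blast
  obtain c where c: "\<forall>M. 0 \<le> c M" "\<forall>M. c M \<noteq> 0 \<longrightarrow> pm V E (\<lambda>e. e) M"
    "sum c (Pow E) = 1" "\<forall>e\<in>E. sum c {M\<in>Pow E. e \<in> M} = 1/(3::real)"
    using edmonds[OF mg cubic_inP[OF cub br]] unfolding decomp_def by blast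
  let ?IS = "{S. independent_set E line_adj S}"
  have ISP: "?IS \<subseteq> Pow E" by (auto simp: independent_set_def)
  have z: "c M = 0" if "M \<in> Pow E - ?IS" for M using that c(2) pm_indep[OF mg] by blast
  have sIS: "sum c {M\<in>?IS. P M} = sum c {M\<in>Pow E. P M}" for P
    by (rule sum.mono_neutral_left) (use fE ISP z in auto)
  show ?thesis unfolding VP_def
  proof (intro CollectI exI[of _ c] conjI allI impI)
    show "0 \<le> c S" for S using c(1) by blast
    show "independent_set E line_adj S" if "c S \<noteq> 0" for S using c(2) that pm_indep[OF mg] by blast
    show "sum c ?IS = 1" using sIS[of "\<lambda>_. True"] c(3) by (simp add: Pow_def)
    fix i
    have "(\<Sum>S\<in>?IS. c S * (if i \<in> S then 1 else 0)) = sum c {S\<in>?IS. i \<in> S}"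
    proof -
      have fIS: "finite ?IS" using ISP fE finite_subset by blast
      have "(\<Sum>S\<in>?IS. c S * (if i \<in> S then 1 else 0)) = (\<Sum>S\<in>?IS. if i \<in> S then c S else 0)"
        by (rule sum.cong) auto
      also have "\<dots> = sum c {S\<in>?IS. i \<in> S}" by (rule sum.inter_filter[OF fIS, symmetric])
      finally show ?thesis .
    qed
    also have "\<dots> = sum c {S\<in>Pow E. i \<in> S}" by (rule sIS)
    also have "\<dots> = a3 E i"
    proof (cases "i \<in> E")
      case True then show ?thesis using c(4) by (simp add: a3_def)
    next
      case False
      then have e: "{S\<in>Pow E. i \<in> S} = {}" by auto
      show ?thesis unfolding e using False by (simp add: a3_def)
    qed
    finally show "a3 E i = (\<Sum>S\<in>?IS. c S * (if i \<in> S then 1 else 0))" by simp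
  qed
qed


lemma IS_finite: "finite W \<Longrightarrow> finite {S. independent_set W adj S}"
  by (rule finite_subset[of _ "Pow W"]) (auto simp: independent_set_def)

lemma VP_bounds:
  assumes fW: "finite W" and a: "a \<in> VP W adj"
  shows "0 \<le> a i" "a i \<le> 1"
proof -
  obtain c where c: "\<forall>S. c S \<ge> 0" "(\<Sum>S\<in>{S. independent_set W adj S}. c S) = 1"
    "a i = (\<Sum>S\<in>{S. independent_set W adj S}. c S * (if i \<in> S then 1 else 0))"
    using a unfolding VP_def by blast
  show "0 \<le> a i" unfolding c(3) using c(1) by (intro sum_nonneg) auto
  have "(\<Sum>S\<in>{S. independent_set W adj S}. c S * (if i \<in> S then 1 else 0)) \<le> (\<Sum>S\<in>{S. independent_set W adj S}. c S)"
    by (rule sum_mono) (use c(1) in auto)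
  then show "a i \<le> 1" using c by simp
qed

lemma log_inv_nonneg: "0 < a \<Longrightarrow> a \<le> 1 \<Longrightarrow> 0 \<le> log 2 (1 / a)"
  by simp

lemma graph_entropy_upper:
  assumes cub: "cubic_graph V E" and br: "bridgeless E" and p: "prob_dist E p"
  shows "graph_entropy E line_adj p \<le> log 2 3"
proof -
  have fE: "finite E" using cubic_mg[OF cub] mg_finite by blast
  let ?F = "{(\<Sum>i\<in>{i\<in>E. p i > 0}. p i * log 2 (1 / a i)) | a. a \<in> VP E line_adj \<and> (\<forall>i\<in>E. p i > 0 \<longrightarrow> a i > 0)}"
  have a3: "a3 E \<in> VP E line_adj" by (rule a3_VP[OF cub br])
  have "(\<Sum>i\<in>{i\<in>E. p i > 0}. p i * log 2 (1 / a3 E i)) = (\<Sum>i\<in>{i\<in>E. p i > 0}. p i * log 2 3)"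
    by (rule sum.cong) (auto simp: a3_def)
  also have "\<dots> = log 2 3 * (\<Sum>i\<in>{i\<in>E. p i > 0}. p i)" by (simp add: sum_distrib_left mult.commute)
  also have "(\<Sum>i\<in>{i\<in>E. p i > 0}. p i) = (\<Sum>i\<in>E. p i)"
    by (rule sum.mono_neutral_left) (use fE p in \<open>auto simp: prob_dist_def\<close>)
  also have "\<dots> = 1" using p by (simp add: prob_dist_def)
  finally have v: "(\<Sum>i\<in>{i\<in>E. p i > 0}. p i * log 2 (1 / a3 E i)) = log 2 3" by simp
  have mem: "log 2 3 \<in> ?F"
    by (rule CollectI, rule exI[of _ "a3 E"]) (use v a3 in \<open>auto simp: a3_def\<close>)
  have bdd: "bdd_below ?F"
  proof (rule bdd_belowI)
    fix z assume "z \<in> ?F"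
    then obtain a where a: "a \<in> VP E line_adj" "\<forall>i\<in>E. p i > 0 \<longrightarrow> a i > 0"
      and z: "z = (\<Sum>i\<in>{i\<in>E. p i > 0}. p i * log 2 (1 / a i))" by blast
    show "0 \<le> z" unfolding z
    proof (rule sum_nonneg)
      fix i assume i: "i \<in> {i\<in>E. p i > 0}"
      then have "0 < a i" "a i \<le> 1" using a VP_bounds[OF fE a(1)] by auto
      then have "0 \<le> log 2 (1 / a i)" by simp
      then show "0 \<le> p i * log 2 (1 / a i)" using i by simp
    qed
  qed
  show ?thesis unfolding graph_entropy_def using cInf_lower[OF mem bdd] .
qed


lemma cubic_handshake: assumes cub: "cubic_graph V E" shows "2 * card E = 3 * card V"
proof -
  have mg: "mg V E (\<lambda>e. e)" by (rule cubic_mg[OF cub])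
  have hs: "(\<Sum>z\<in>V. sum (\<lambda>_. 1::real) (inc E (\<lambda>e. e) z)) = sum (\<lambda>_. 1::real) (cut E (\<lambda>e. e) V) + 2 * sum (\<lambda>_. 1::real) {e\<in>E. e \<subseteq> V}"
    by (rule handshake[OF mg subset_refl])
  have "{e\<in>E. e \<subseteq> V} = E" using mg_en(1)[OF mg] by blast
  moreover have "(\<Sum>z\<in>V. sum (\<lambda>_. 1::real) (inc E (\<lambda>e. e) z)) = (\<Sum>z\<in>V. 3)"
    by (rule sum.cong) (use cubic_deg[OF cub] in auto)
  ultimately have "real (3 * card V) = real (2 * card E)" using hs cut_V[OF mg] by simp
  then show ?thesis by linarith
qed

lemma card_indep_le:
  assumes cub: "cubic_graph V E" and S: "independent_set E line_adj S"
  shows "3 * card S \<le> card E"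
proof -
  have mg: "mg V E (\<lambda>e. e)" by (rule cubic_mg[OF cub])
  have fE: "finite E" and fV: "finite V" using mg mg_finite by blast+
  have SE: "S \<subseteq> E" using S by (simp add: independent_set_def)
  have fS: "finite S" using SE fE finite_subset by blast
  have pw: "pairwise disjnt S"
    unfolding pairwise_def disjnt_def using S unfolding independent_set_def line_adj_def by blast
  have fin: "\<And>A. A \<in> S \<Longrightarrow> finite A" using SE mg_en(2)[OF mg] card.infinite by fastforce
  have "card (\<Union>S) = sum card S" by (rule card_Union_disjoint[OF pw fin])
  also have "\<dots> = sum (\<lambda>_. 2) S" by (rule sum.cong) (use SE mg_en(2)[OF mg] in auto)
  finally have cU: "card (\<Union>S) = 2 * card S" by simp
  have "\<Union>S \<subseteq> V" using SE mg_en(1)[OF mg] by blast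
  then have "card (\<Union>S) \<le> card V" using fV card_mono by blast
  then show ?thesis using cU cubic_handshake[OF cub] by linarith
qed

lemma sum_VP_le:
  assumes cub: "cubic_graph V E" and a: "a \<in> VP E line_adj"
  shows "(\<Sum>i\<in>E. a i) \<le> real (card E) / 3"
proof -
  have fE: "finite E" using cubic_mg[OF cub] mg_finite by blast
  let ?IS = "{S. independent_set E line_adj S}"
  have fIS: "finite ?IS" by (rule IS_finite[OF fE])
  obtain c where c: "\<forall>S. c S \<ge> 0" "(\<Sum>S\<in>?IS. c S) = 1"
    "\<forall>i. a i = (\<Sum>S\<in>?IS. c S * (if i \<in> S then 1 else 0))"
    using a unfolding VP_def by blast
  have "(\<Sum>i\<in>E. a i) = (\<Sum>i\<in>E. \<Sum>S\<in>?IS. c S * (if i \<in> S then 1 else 0))" using c(3) by simp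
  also have "\<dots> = (\<Sum>S\<in>?IS. \<Sum>i\<in>E. c S * (if i \<in> S then 1 else 0))" by (rule sum.swap)
  also have "\<dots> = (\<Sum>S\<in>?IS. c S * real (card S))"
  proof (rule sum.cong[OF refl])
    fix S assume "S \<in> ?IS"
    then have SE: "S \<subseteq> E" by (simp add: independent_set_def)
    have "(\<Sum>i\<in>E. c S * (if i \<in> S then 1 else 0)) = c S * (\<Sum>i\<in>E. (if i \<in> S then 1 else 0))"
      by (simp add: sum_distrib_left)
    also have "(\<Sum>i\<in>E. (if i \<in> S then 1 else 0 :: real)) = real (card (E \<inter> S))"
      using fE by (simp add: sum.If_cases)
    also have "E \<inter> S = S" using SE by blast
    finally show "(\<Sum>i\<in>E. c S * (if i \<in> S then 1 else 0)) = c S * real (card S)" .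
  qed
  also have "\<dots> \<le> (\<Sum>S\<in>?IS. c S * (real (card E) / 3))"
  proof (rule sum_mono)
    fix S assume "S \<in> ?IS"
    then have "3 * card S \<le> card E" using card_indep_le[OF cub] by blast
    then have "real (card S) \<le> real (card E) / 3" by simp
    moreover have "0 \<le> c S" using c(1) by blast
    ultimately show "c S * real (card S) \<le> c S * (real (card E) / 3)" by (rule mult_left_mono)
  qed
  also have "\<dots> = (\<Sum>S\<in>?IS. c S) * (real (card E) / 3)" by (rule sum_distrib_right[symmetric])
  also have "\<dots> = real (card E) / 3" using c(2) by simp
  finally show ?thesis .
qed

lemma ln_sum_bound:
  fixes a :: "'b \<Rightarrow> real"
  assumes fE: "finite E" and ne: "E \<noteq> {}" and pos: "\<forall>i\<in>E. 0 < a i"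
    and s: "(\<Sum>i\<in>E. a i) \<le> real (card E) / 3"
  shows "(\<Sum>i\<in>E. ln (a i)) \<le> - real (card E) * ln 3"
proof -
  define m where "m = real (card E)"
  have m: "0 < m" using fE ne by (simp add: m_def card_gt_0_iff)
  define A where "A = (\<Sum>i\<in>E. a i)"
  have A: "0 < A" unfolding A_def using sum_pos[OF fE ne] pos by blast
  define ab where "ab = A / m"
  have ab: "0 < ab" using A m by (simp add: ab_def)
  have ab3: "ab \<le> 1 / 3" using s m by (simp add: ab_def A_def m_def divide_simps)
  have "(\<Sum>i\<in>E. ln (a i) - ln ab) \<le> (\<Sum>i\<in>E. a i / ab - 1)"
  proof (rule sum_mono)
    fix i assume i: "i \<in> E"
    have ai: "0 < a i" using pos i by blast
    have "ln (a i / ab) \<le> a i / ab - 1" using ai ab by (intro ln_le_minus_one) simp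
    moreover have "ln (a i / ab) = ln (a i) - ln ab" using ai ab by (simp add: ln_div)
    ultimately show "ln (a i) - ln ab \<le> a i / ab - 1" by linarith
  qed
  also have "\<dots> = A / ab - m" by (simp add: A_def m_def sum_subtractf sum_divide_distrib)
  also have "\<dots> = 0" using A m by (simp add: ab_def)
  finally have "(\<Sum>i\<in>E. ln (a i)) \<le> m * ln ab" by (simp add: sum_subtractf m_def)
  also have "ln ab \<le> ln (1/3)" using ab ab3 by simp
  then have "m * ln ab \<le> m * ln (1/3)" using m by simp
  also have "ln (1/3::real) = - ln 3" by (simp add: ln_div)
  finally show ?thesis by (simp add: m_def)
qed

lemma graph_entropy_lower:
  assumes cub: "cubic_graph V E" and br: "bridgeless E" and ne: "E \<noteq> {}"
  shows "log 2 3 \<le> graph_entropy E line_adj (uniform_dist E)"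
proof -
  have fE: "finite E" using cubic_mg[OF cub] mg_finite by blast
  define m where "m = real (card E)"
  have m: "0 < m" using fE ne by (simp add: m_def card_gt_0_iff)
  let ?u = "uniform_dist E"
  have u: "?u i = 1 / m" for i by (simp add: uniform_dist_def m_def)
  let ?F = "{(\<Sum>i\<in>{i\<in>E. ?u i > 0}. ?u i * log 2 (1 / a i)) | a. a \<in> VP E line_adj \<and> (\<forall>i\<in>E. ?u i > 0 \<longrightarrow> a i > 0)}"
  have posu: "{i\<in>E. ?u i > 0} = E" using m u by auto
  have a3: "a3 E \<in> VP E line_adj" by (rule a3_VP[OF cub br])
  have ne': "?F \<noteq> {}" using a3 by (auto simp: a3_def)
  have "log 2 3 \<le> z" if "z \<in> ?F" for z
  proof -
    obtain a where a: "a \<in> VP E line_adj" "\<forall>i\<in>E. ?u i > 0 \<longrightarrow> a i > 0"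
      and z: "z = (\<Sum>i\<in>{i\<in>E. ?u i > 0}. ?u i * log 2 (1 / a i))" using \<open>z \<in> ?F\<close> by blast
    have apos: "\<forall>i\<in>E. 0 < a i" using a(2) m u by auto
    have lb: "(\<Sum>i\<in>E. ln (a i)) \<le> - m * ln 3"
      unfolding m_def by (rule ln_sum_bound[OF fE ne apos sum_VP_le[OF cub a(1)]])
    have "z = (\<Sum>i\<in>E. 1 / m * (- ln (a i) / ln 2))"
      unfolding z posu u using apos m by (intro sum.cong) (auto simp: log_def ln_div)
    also have "\<dots> = - (\<Sum>i\<in>E. ln (a i)) / (m * ln 2)"
      by (simp add: sum_distrib_left[symmetric] sum_divide_distrib[symmetric] sum_negf)
    finally have z2: "z = - (\<Sum>i\<in>E. ln (a i)) / (m * ln 2)" .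
    have l2: "0 < m * ln 2" using m by simp
    have "log 2 3 = (m * ln 3) / (m * ln 2)" using m by (simp add: log_def)
    also have "\<dots> \<le> - (\<Sum>i\<in>E. ln (a i)) / (m * ln 2)"
      using lb l2 by (intro divide_right_mono) auto
    finally show ?thesis using z2 by simp
  qed
  then show ?thesis unfolding graph_entropy_def by (intro cInf_greatest[OF ne']) blast
qed

lemma final:
  fixes V :: "'a set" and E :: "'a set set"
  assumes "cubic_graph V E" and "bridgeless E"
  shows "entropy_symmetric E line_adj"
  unfolding entropy_symmetric_def
proof (intro allI impI)
  fix p assume p: "prob_dist E p"
  have "E \<noteq> {}" using p by (auto simp: prob_dist_def)
  then show "graph_entropy E line_adj p \<le> graph_entropy E line_adj (uniform_dist E)"
    using graph_entropy_upper[OF assms p] graph_entropy_lower[OF assms] by linarith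
qed


theorem mainTheorem6:
  fixes V :: "'a set" and E :: "'a set set"
  assumes "cubic_graph V E" and "bridgeless E"
  shows "entropy_symmetric E line_adj"
  using final[OF assms] .

end
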